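(* Let $S=\{0,1,2,\dots\}$, $\lambda,\mu>0$, $\theta=\lambda/\mu$, and let $X$ be the continuous-time Markov chain on $S$ with rates $q(i,i+1)=\lambda$; $q(i,i-k)=\mu$ for $i\ge1$, $1\le k\le i$; $q(i,i)=-(\lambda+i\mu)$; all other off-diagonal rates $0$. Let $\tau$ be a probability on $S$ with finite $m$-th moment for some integer $m\ge1$, $\mathbf P^{(\tau)}$ the law of $X$ with initial distribution $\tau$, $F^{(\tau)}_{X(t)}(x)=\mathbf P^{(\tau)}\{X(t)\le x\}$, $T(x)=\sum_{n\le x}\tau(n)$, $\Pi^*(x)=\sum_{n\le x}\pi^*(n)$ with $\pi^*(n)=\theta^n(n+1)/(\theta+1)_{n+1}$. Define $$h_m(x)=\sum_{\rho\ge0}\frac{e^{-\theta}\theta^\rho}{\rho!}(x+\rho)^{m-1}\ (x\ge0),\qquad \mathcal K_{h_m}(\tau,\pi^* )=\int_0^{\infty}h_m(x)|T(x)-\Pi^*(x)|\,dx.$$ Then for all $t\ge0$, $$\Big|\int_{\mathbb R}x^m\,d\big(F^{(\tau)}_{X(t)}(x)-\Pi^*(x)\big)\Big|\le m\,\mathcal K_{h_m}(\tau,\pi^* )\exp\{-\mu t-\theta(e^{-\mu t}+\mu t-1)\}.$$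
   Context: $(a)_n$ denotes the rising factorial $a(a+1)\cdots(a+n-1)$, $(a)_0=1$. *)

theory Defs
  imports "HOL-Analysis.Analysis"
begin

definition qrate :: "real \<Rightarrow> real \<Rightarrow> nat \<Rightarrow> nat \<Rightarrow> real" where
  "qrate lam mu i j = (if j = Suc i then lam else if j < i then mu else 0)"

definition qtot :: "real \<Rightarrow> real \<Rightarrow> nat \<Rightarrow> real" where
  "qtot lam mu i = lam + real i * mu"

text \<open>Iterates of the backward integral equation (Feller's construction of the
  minimal transition function of the Q-process).\<close>
fun Piter :: "real \<Rightarrow> real \<Rightarrow> nat \<Rightarrow> real \<Rightarrow> nat \<Rightarrow> nat \<Rightarrow> real" where
  "Piter lam mu 0 t i j = 0"
| "Piter lam mu (Suc n) t i j =
     (if i = j then exp (- qtot lam mu i * t) else 0)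
     + integral {0..t} (\<lambda>s. exp (- qtot lam mu i * s) *
          (\<Sum>k\<in>{..Suc i} - {i}. qrate lam mu i k * Piter lam mu n (t - s) k j))"

text \<open>Transition function p_t(i,j) = P(X(t)=j | X(0)=i) of the (minimal) chain.\<close>
definition ptrans :: "real \<Rightarrow> real \<Rightarrow> real \<Rightarrow> nat \<Rightarrow> nat \<Rightarrow> real" where
  "ptrans lam mu t i j = (SUP n. Piter lam mu n t i j)"

definition distX :: "real \<Rightarrow> real \<Rightarrow> (nat \<Rightarrow> real) \<Rightarrow> real \<Rightarrow> nat \<Rightarrow> real" where
  "distX lam mu tau t j = (\<Sum>i. tau i * ptrans lam mu t i j)"

definition pistar :: "real \<Rightarrow> nat \<Rightarrow> real" where
  "pistar \<theta> n = \<theta> ^ n * real (n + 1) / pochhammer (\<theta> + 1) (n + 1)"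

text \<open>Distribution function of a probability on nat, at real x \<ge> 0.\<close>
definition cdfN :: "(nat \<Rightarrow> real) \<Rightarrow> real \<Rightarrow> real" where
  "cdfN p x = (\<Sum>n\<in>{..nat \<lfloor>x\<rfloor>}. p n)"

definition hfun :: "real \<Rightarrow> nat \<Rightarrow> real \<Rightarrow> real" where
  "hfun \<theta> m x = (\<Sum>\<rho>. exp (- \<theta>) * \<theta> ^ \<rho> / fact \<rho> * (x + real \<rho>) ^ (m - 1))"

definition Kh :: "real \<Rightarrow> nat \<Rightarrow> (nat \<Rightarrow> real) \<Rightarrow> real" where
  "Kh \<theta> m tau = (LBINT x:{0..}. hfun \<theta> m x * \<bar>cdfN tau x - cdfN (pistar \<theta>) x\<bar>)"

end

theory Submission
  imports Defs "HOL-Analysis.Analysis"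
begin


lemma integral_flip:
  fixes g :: "real \<Rightarrow> real"
  assumes "continuous_on {0..t} g"
  shows "integral {0..t} (\<lambda>s. g (t - s)) = integral {0..t} g"
proof -
  have "(g has_integral integral {0..t} g) {0..t}"
    using assms integrable_continuous_real by blast
  then have "((\<lambda>x. g (-x)) has_integral integral {0..t} g) {-t..-0}"
    by (simp only: has_integral_reflect_real)
  then have "(((\<lambda>x. g (-x)) \<circ> (+) (-t)) has_integral integral {0..t} g) {0..t}"
    by (subst has_integral_shift_Icc_real) simp
  then show ?thesis by (simp add: o_def integral_unique)
qed

definition Phi :: "real \<Rightarrow> (real \<Rightarrow> real) \<Rightarrow> real \<Rightarrow> real" where
  "Phi q h t = integral {0..t} (\<lambda>s. exp (- q * s) * h (t - s))"

lemma Phi_alt: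
  assumes "continuous_on {0..t} h"
  shows "Phi q h t = exp (- q * t) * integral {0..t} (\<lambda>r. exp (q * r) * h r)"
proof -
  have c: "continuous_on {0..t} (\<lambda>r. exp (q * r) * h r)"
    by (intro continuous_intros assms)
  have "Phi q h t = integral {0..t} (\<lambda>s. exp (- q * t) * (exp (q * (t - s)) * h (t - s)))"
    unfolding Phi_def
    by (rule integral_cong) (simp add: algebra_simps flip: exp_add)
  also have "\<dots> = exp (- q * t) * integral {0..t} (\<lambda>s. exp (q * (t - s)) * h (t - s))"
    by simp
  also have "\<dots> = exp (- q * t) * integral {0..t} (\<lambda>r. exp (q * r) * h r)"
    using integral_flip[OF c] by simp
  finally show ?thesis .
qed


lemma cont_flip:
  fixes h :: "real \<Rightarrow> real"
  assumes "continuous_on {0..t} h"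
  shows "continuous_on {0..t} (\<lambda>s. h (t - s))"
proof -
  have "continuous_on {0..t} (h \<circ> (\<lambda>s. t - s))"
    by (rule continuous_on_compose) (auto intro!: continuous_intros continuous_on_subset[OF assms])
  then show ?thesis by (simp add: o_def)
qed

lemma Phi_integrand_cont:
  fixes h h1 h2 :: "real \<Rightarrow> real" and q t T :: real
  assumes "continuous_on {0..t} h"
  shows "continuous_on {0..t} (\<lambda>s. exp (- q * s) * h (t - s))"
  by (intro continuous_on_mult cont_flip[OF assms]) (intro continuous_intros)

lemma Phi_integrable:
  fixes h h1 h2 :: "real \<Rightarrow> real" and q t T :: real
  assumes "continuous_on {0..t} h"
  shows "(\<lambda>s. exp (- q * s) * h (t - s)) integrable_on {0..t}"
  using integrable_continuous_real[OF Phi_integrand_cont[OF assms]] by blast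

lemma Phi_cont:
  fixes h h1 h2 :: "real \<Rightarrow> real" and q t T :: real
  assumes "continuous_on {0..T} h"
  shows "continuous_on {0..T} (Phi q h)"
proof -
  have "continuous_on {0..T} (\<lambda>t. exp (- q * t) * integral {0..t} (\<lambda>r. exp (q * r) * h r))"
    by (intro continuous_intros indefinite_integral_continuous_1 integrable_continuous_real assms)
  then show ?thesis
    by (rule continuous_on_eq) (auto simp: Phi_alt[OF continuous_on_subset[OF assms]])
qed

lemma Phi_mono:
  fixes h h1 h2 :: "real \<Rightarrow> real" and q t T :: real
  assumes "continuous_on {0..t} h1" "continuous_on {0..t} h2" "\<And>r. r \<in> {0..t} \<Longrightarrow> h1 r \<le> h2 r"
  shows "Phi q h1 t \<le> Phi q h2 t"
  unfolding Phi_def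
  by (rule integral_le[OF Phi_integrable[OF assms(1)] Phi_integrable[OF assms(2)]])
     (auto intro!: mult_left_mono assms(3))

lemma Phi_nonneg:
  fixes h h1 h2 :: "real \<Rightarrow> real" and q t T :: real
  assumes "continuous_on {0..t} h" "\<And>r. r \<in> {0..t} \<Longrightarrow> 0 \<le> h r"
  shows "0 \<le> Phi q h t"
  unfolding Phi_def
  by (rule integral_nonneg[OF Phi_integrable[OF assms(1)]]) (auto intro!: assms(2) mult_nonneg_nonneg)

lemma Phi_diff:
  fixes h h1 h2 :: "real \<Rightarrow> real" and q t T :: real
  assumes "continuous_on {0..t} h1" "continuous_on {0..t} h2"
  shows "Phi q (\<lambda>r. h1 r - h2 r) t = Phi q h1 t - Phi q h2 t"
  unfolding Phi_def
  by (subst integral_diff[OF Phi_integrable[OF assms(1)] Phi_integrable[OF assms(2)], symmetric])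
     (simp add: algebra_simps)

lemma Phi_add:
  fixes h h1 h2 :: "real \<Rightarrow> real" and q t T :: real
  assumes "continuous_on {0..t} h1" "continuous_on {0..t} h2"
  shows "Phi q (\<lambda>r. h1 r + h2 r) t = Phi q h1 t + Phi q h2 t"
  unfolding Phi_def
  by (subst integral_add[OF Phi_integrable[OF assms(1)] Phi_integrable[OF assms(2)], symmetric])
     (simp add: algebra_simps)

lemma Phi_cmult:
  fixes h :: "real \<Rightarrow> real"
  shows "Phi q (\<lambda>r. c * h r) t = c * Phi q h t"
  unfolding Phi_def by (simp add: algebra_simps)

lemma Phi_abs:
  fixes h h1 h2 :: "real \<Rightarrow> real" and q t T :: real
  assumes "continuous_on {0..t} h"
  shows "\<bar>Phi q h t\<bar> \<le> Phi q (\<lambda>r. \<bar>h r\<bar>) t"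
proof -
  have c: "continuous_on {0..t} (\<lambda>r. \<bar>h r\<bar>)" by (intro continuous_intros assms)
  have "Phi q h t \<le> Phi q (\<lambda>r. \<bar>h r\<bar>) t"
    by (rule Phi_mono[OF assms c]) auto
  moreover have "- Phi q h t \<le> Phi q (\<lambda>r. \<bar>h r\<bar>) t"
  proof -
    have "Phi q (\<lambda>r. - 1 * h r) t \<le> Phi q (\<lambda>r. \<bar>h r\<bar>) t"
      by (rule Phi_mono[OF _ c]) (auto intro!: continuous_intros assms)
    then show ?thesis by (simp only: Phi_cmult)
  qed
  ultimately show ?thesis by linarith
qed

lemma duhamel:
  fixes f h :: "real \<Rightarrow> real"
  assumes der: "\<And>x. (f has_real_derivative (- q * f x + h x)) (at x)"
    and ch: "continuous_on {0..t} h" and t: "0 \<le> t"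
  shows "f t = exp (- q * t) * f 0 + Phi q h t"
proof -
  have d: "((\<lambda>r. exp (q * r) * f r) has_vector_derivative (exp (q * r) * h r)) (at r within {0..t})" for r
  proof -
    have "((\<lambda>r. exp (q * r) * f r) has_real_derivative
        (exp (q * r) * q * f r + exp (q * r) * (- q * f r + h r))) (at r)"
      by (auto intro!: derivative_eq_intros der)
    then have "((\<lambda>r. exp (q * r) * f r) has_real_derivative (exp (q * r) * h r)) (at r)"
      by (simp add: algebra_simps)
    then show ?thesis
      by (simp add: has_real_derivative_iff_has_vector_derivative has_vector_derivative_at_within)
  qed
  have "((\<lambda>r. exp (q * r) * h r) has_integral (exp (q * t) * f t - exp (q * 0) * f 0)) {0..t}"
    by (rule fundamental_theorem_of_calculus[OF t]) (use d in auto)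
  then have i: "integral {0..t} (\<lambda>r. exp (q * r) * h r) = exp (q * t) * f t - f 0"
    by (simp add: integral_unique)
  show ?thesis
    unfolding Phi_alt[OF ch] i
    by (simp add: algebra_simps flip: exp_add)
qed


definition Gs :: "real \<Rightarrow> nat \<Rightarrow> real" where
  "Gs th k = th ^ k / pochhammer (th + 1) k"

lemma Gs_0[simp]: "Gs th 0 = 1" by (simp add: Gs_def)

lemma Gs_Suc:
  assumes "th > 0"
  shows "Gs th (Suc k) = th * Gs th k / (th + 1 + real k)"
proof -
  have "pochhammer (th + 1) (Suc k) = (th + 1 + real k) * pochhammer (th + 1) k"
    by (simp only: pochhammer_rec')
  then show ?thesis by (simp add: Gs_def)
qed

lemma Gs_rec:
  assumes "th > 0"
  shows "th * Gs th k = (th + real (Suc k)) * Gs th (Suc k)"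
  using assms unfolding Gs_Suc[OF assms] by (simp add: field_simps)

lemma Gs_nonneg: "th > 0 \<Longrightarrow> 0 \<le> Gs th k"
  unfolding Gs_def by (intro divide_nonneg_pos pochhammer_pos) auto

lemma Gs_le1: assumes "th > 0" shows "Gs th k \<le> 1"
proof (induction k)
  case (Suc k)
  have "(th + real (Suc k)) * Gs th (Suc k) = th * Gs th k" using Gs_rec[OF assms] by simp
  also have "\<dots> \<le> th * 1" using Suc assms by (intro mult_left_mono) auto
  finally have "(th + real (Suc k)) * Gs th (Suc k) \<le> th + real (Suc k)" by simp
  then show ?case using assms by (smt (verit) mult_le_cancel_left2 of_nat_0_le_iff)
qed simp

lemma pistar_Gs:
  assumes "th > 0"
  shows "pistar th n = Gs th n - Gs th (Suc n)"
proof -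
  have e: "pochhammer (th + 1) (n + 1) = (th + 1 + real n) * pochhammer (th + 1) n"
    by (simp only: Suc_eq_plus1[symmetric] pochhammer_rec')
  have pos: "th + 1 + real n > 0" using assms by simp
  have "pistar th n = Gs th n * (real n + 1) / (th + 1 + real n)"
    unfolding pistar_def e Gs_def by (simp add: ac_simps)
  also have "\<dots> = Gs th n - Gs th (Suc n)"
    unfolding Gs_Suc[OF assms] using pos by (simp add: field_simps)
  finally show ?thesis .
qed

definition Lam :: "real \<Rightarrow> real \<Rightarrow> real \<Rightarrow> real" where
  "Lam lam mu t = lam / mu * (1 - exp (- mu * t))"

definition bb :: "real \<Rightarrow> real \<Rightarrow> nat \<Rightarrow> nat \<Rightarrow> real \<Rightarrow> real" where
  "bb lam mu r k t = exp (- (lam + mu * real k) * t) * Lam lam mu t ^ r / fact r"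

definition bbd :: "real \<Rightarrow> real \<Rightarrow> nat \<Rightarrow> nat \<Rightarrow> real \<Rightarrow> real" where
  "bbd lam mu r k t = - (lam + mu * real k) * bb lam mu r k t
     + (if r = 0 then 0 else lam * bb lam mu (r - 1) (Suc k) t)"

lemma Lam_deriv: "mu \<noteq> 0 \<Longrightarrow> (Lam lam mu has_real_derivative lam * exp (- mu * t)) (at t)"
  unfolding Lam_def by (auto intro!: derivative_eq_intros)

lemma bb_deriv:
  assumes "mu \<noteq> 0"
  shows "(bb lam mu r k has_real_derivative bbd lam mu r k t) (at t)"
proof (cases r)
  case 0
  then show ?thesis unfolding bb_def bbd_def
    by (auto intro!: derivative_eq_intros)
next
  case (Suc r')
  have "(bb lam mu r k has_real_derivative
      - (lam + mu * real k) * exp (- (lam + mu * real k) * t) * Lam lam mu t ^ r / fact r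
      + exp (- (lam + mu * real k) * t) * (real r * Lam lam mu t ^ (r - 1) * (lam * exp (- mu * t))) / fact r) (at t)"
    unfolding bb_def
    by (auto intro!: derivative_eq_intros Lam_deriv[OF assms] simp: field_simps)
  moreover have "exp (- (lam + mu * real k) * t) * (real r * Lam lam mu t ^ (r - 1) * (lam * exp (- mu * t))) / fact r
      = lam * bb lam mu r' (Suc k) t"
  proof -
    have e1: "exp (- (lam + mu * real (Suc k)) * t) = exp (- (lam + mu * real k) * t) * exp (- mu * t)"
      by (simp add: algebra_simps flip: exp_add)
    have f: "fact r = real r * fact r'" using Suc by simp
    have rp: "real r > 0" using Suc by simp
    show ?thesis unfolding bb_def e1 f Suc diff_Suc_1 using rp
      by (simp add: field_simps del: of_nat_Suc)
  qed
  ultimately show ?thesis unfolding bbd_def using Suc by (simp add: bb_def algebra_simps)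
qed

lemma bb_0: "bb lam mu r k 0 = (if r = 0 then 1 else 0)"
  by (simp add: bb_def Lam_def)

lemma cont_bb: "continuous_on A (bb lam mu r k)"
  unfolding bb_def Lam_def by (intro continuous_intros) auto

definition ee :: "real \<Rightarrow> nat \<Rightarrow> nat \<Rightarrow> real" where
  "ee th k i = (if k \<le> i then 1 else 0) - Gs th k"

lemma ee_0[simp]: "ee th 0 i = 0" by (simp add: ee_def)

lemma sum_ind_lt: "(\<Sum>k'<i. (if k \<le> k' then 1 else 0 :: real)) = real (i - k)"
  by (induction i) (auto simp: Suc_diff_le)

lemma Q_ee:
  assumes "lam > 0" "mu > 0" "k \<ge> 1"
  shows "lam * ee (lam/mu) k (Suc i) + mu * (\<Sum>k'<i. ee (lam/mu) k k') - (lam + real i * mu) * ee (lam/mu) k i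
       = lam * ee (lam/mu) (k - 1) i - (lam + mu * real k) * ee (lam/mu) k i"
proof -
  obtain k' where k: "k = Suc k'" using assms(3) by (cases k) auto
  have r: "lam / mu * Gs (lam/mu) k' = (lam/mu + real k) * Gs (lam/mu) k"
    using Gs_rec[of "lam/mu" k'] assms k by simp
  then have r2: "lam * Gs (lam/mu) k' = (lam + mu * real k) * Gs (lam/mu) k"
    using assms by (simp add: field_simps)
  have s: "(\<Sum>k'<i. ee (lam/mu) k k') = real (i - k) - real i * Gs (lam/mu) k"
    unfolding ee_def by (simp add: sum_subtractf sum_ind_lt)
  show ?thesis
    unfolding s using r2 k
    by (cases "k \<le> i") (auto simp: ee_def algebra_simps of_nat_diff)
qed

definition V :: "real \<Rightarrow> real \<Rightarrow> nat \<Rightarrow> real \<Rightarrow> nat \<Rightarrow> real" where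
  "V lam mu n t i = Gs (lam/mu) n + (\<Sum>k\<in>{1..n}. bb lam mu (n - k) k t * ee (lam/mu) k i)"

definition Vd :: "real \<Rightarrow> real \<Rightarrow> nat \<Rightarrow> real \<Rightarrow> nat \<Rightarrow> real" where
  "Vd lam mu n t i = (\<Sum>k\<in>{1..n}. bbd lam mu (n - k) k t * ee (lam/mu) k i)"

lemma V_deriv: "mu \<noteq> 0 \<Longrightarrow> ((\<lambda>t. V lam mu n t i) has_real_derivative Vd lam mu n t i) (at t)"
  unfolding V_def Vd_def
  by (auto intro!: derivative_eq_intros bb_deriv)

lemma cont_V: "continuous_on A (\<lambda>t. V lam mu n t i)"
  unfolding V_def by (intro continuous_intros continuous_on_sum continuous_on_mult_right cont_bb)

lemma V_0: "V lam mu n 0 i = (if n \<le> i then 1 else 0)"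
proof (cases n)
  case 0 then show ?thesis by (simp add: V_def)
next
  case (Suc n')
  have "(\<Sum>k\<in>{1..n}. bb lam mu (n - k) k 0 * ee (lam/mu) k i) = (\<Sum>k\<in>{n}. ee (lam/mu) k i)"
    by (rule sum.mono_neutral_cong_right) (auto simp: bb_0 Suc)
  then show ?thesis by (simp add: V_def ee_def)
qed

lemma shift_sum:
  fixes a e :: "nat \<Rightarrow> real"
  assumes "e 0 = 0"
  shows "(\<Sum>k\<in>{1..n}. a (Suc k) * e k) = (\<Sum>k\<in>{1..Suc n}. a k * e (k - 1))"
  using assms by (induction n) auto


lemma Vd_eq:
  assumes "lam > 0" "mu > 0"
  shows "Vd lam mu n t i = lam * V lam mu n t (Suc i) + mu * (\<Sum>k'<i. V lam mu n t k')
           - (lam + real i * mu) * V lam mu n t i"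
proof -
  let ?th = "lam/mu"
  define a where "a k = (if k \<le> n then lam * bb lam mu (n - k) k t else 0)" for k
  have s1: "(\<Sum>k\<in>{1..n}. (if n - k = 0 then 0 else lam * bb lam mu (n - k - 1) (Suc k) t) * ee ?th k i)
      = (\<Sum>k\<in>{1..n}. a (Suc k) * ee ?th k i)"
    by (rule sum.cong) (auto simp: a_def Suc_diff_Suc)
  also have "\<dots> = (\<Sum>k\<in>{1..Suc n}. a k * ee ?th (k - 1) i)"
    by (rule shift_sum) simp
  also have "\<dots> = (\<Sum>k\<in>{1..n}. lam * bb lam mu (n - k) k t * ee ?th (k - 1) i)"
    by (simp add: a_def)
  finally have s1' : "(\<Sum>k\<in>{1..n}. (if n - k = 0 then 0 else lam * bb lam mu (n - k - 1) (Suc k) t) * ee ?th k i)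
      = (\<Sum>k\<in>{1..n}. lam * bb lam mu (n - k) k t * ee ?th (k - 1) i)" .
  have "Vd lam mu n t i = (\<Sum>k\<in>{1..n}. - (lam + mu * real k) * bb lam mu (n - k) k t * ee ?th k i)
     + (\<Sum>k\<in>{1..n}. (if n - k = 0 then 0 else lam * bb lam mu (n - k - 1) (Suc k) t) * ee ?th k i)"
    unfolding Vd_def bbd_def by (simp add: sum.distrib[symmetric] algebra_simps)
  also have "\<dots> = (\<Sum>k\<in>{1..n}. bb lam mu (n - k) k t *
        (lam * ee ?th (k - 1) i - (lam + mu * real k) * ee ?th k i))"
    unfolding s1' by (simp add: sum.distrib[symmetric] algebra_simps)
  also have "\<dots> = (\<Sum>k\<in>{1..n}. bb lam mu (n - k) k t *
        (lam * ee ?th k (Suc i) + mu * (\<Sum>k'<i. ee ?th k k') - (lam + real i * mu) * ee ?th k i))"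
    by (rule sum.cong) (use Q_ee[OF assms] in auto)
  also have "\<dots> = lam * V lam mu n t (Suc i) + mu * (\<Sum>k'<i. V lam mu n t k')
           - (lam + real i * mu) * V lam mu n t i"
  proof -
    have sw: "(\<Sum>k'<i. \<Sum>k\<in>{1..n}. bb lam mu (n - k) k t * ee ?th k k')
        = (\<Sum>k\<in>{1..n}. bb lam mu (n - k) k t * (\<Sum>k'<i. ee ?th k k'))"
      by (subst sum.swap) (simp add: sum_distrib_left)
    show ?thesis
      unfolding V_def sum.distrib sw
      by (simp add: algebra_simps sum.distrib sum_distrib_left sum_subtractf sum_distrib_right)
  qed
  finally show ?thesis .
qed

definition Fc :: "real \<Rightarrow> real \<Rightarrow> real \<Rightarrow> nat \<Rightarrow> nat \<Rightarrow> real" where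
  "Fc lam mu t i j = V lam mu j t i - V lam mu (Suc j) t i"

lemma cont_Fc: "continuous_on A (\<lambda>t. Fc lam mu t i j)"
  unfolding Fc_def by (intro continuous_intros cont_V)

lemma Fc_0: "Fc lam mu 0 i j = (if i = j then 1 else 0)"
  unfolding Fc_def V_0 by auto

lemma qsum:
  "(\<Sum>k\<in>{..Suc i} - {i}. qrate lam mu i k * u k) = lam * u (Suc i) + mu * (\<Sum>k<i. u k)"
proof -
  have "{..Suc i} - {i} = insert (Suc i) {..<i}" by auto
  then show ?thesis
    by (simp add: qrate_def sum_distrib_left)
qed

lemma Fc_fix:
  assumes "lam > 0" "mu > 0" "t \<ge> 0"
  shows "Fc lam mu t i j = (if i = j then exp (- qtot lam mu i * t) else 0)
     + Phi (qtot lam mu i) (\<lambda>r. lam * Fc lam mu r (Suc i) j + mu * (\<Sum>k<i. Fc lam mu r k j)) t"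
proof -
  have d: "((\<lambda>t. Fc lam mu t i j) has_real_derivative
      (- qtot lam mu i * Fc lam mu x i j + (lam * Fc lam mu x (Suc i) j + mu * (\<Sum>k<i. Fc lam mu x k j)))) (at x)" for x
  proof -
    have "((\<lambda>t. Fc lam mu t i j) has_real_derivative Vd lam mu j x i - Vd lam mu (Suc j) x i) (at x)"
      unfolding Fc_def using assms by (auto intro!: derivative_eq_intros V_deriv)
    moreover have "Vd lam mu j x i - Vd lam mu (Suc j) x i =
       - qtot lam mu i * Fc lam mu x i j + (lam * Fc lam mu x (Suc i) j + mu * (\<Sum>k<i. Fc lam mu x k j))"
      unfolding Vd_eq[OF assms(1,2)] Fc_def qtot_def by (simp add: algebra_simps sum_subtractf)
    ultimately show ?thesis by simp
  qed
  have c: "continuous_on {0..t} (\<lambda>r. lam * Fc lam mu r (Suc i) j + mu * (\<Sum>k<i. Fc lam mu r k j))"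
    by (intro continuous_intros cont_Fc)
  show ?thesis
    using duhamel[OF d c assms(3)] by (simp add: Fc_0)
qed

lemma Piter_Suc:
  "Piter lam mu (Suc n) t i j = (if i = j then exp (- qtot lam mu i * t) else 0)
     + Phi (qtot lam mu i) (\<lambda>r. lam * Piter lam mu n r (Suc i) j + mu * (\<Sum>k<i. Piter lam mu n r k j)) t"
  by (simp only: Piter.simps Phi_def qsum)


lemma exp_sums_real: "(\<lambda>n. x ^ n / fact n) sums exp (x::real)"
  using exp_converges[of x] by (simp add: divide_inverse mult.commute)

lemma Piter_props:
  assumes "lam > 0" "mu > 0"
  shows "continuous_on {0..T} (\<lambda>t. Piter lam mu n t i j) \<and> (\<forall>t\<ge>0. 0 \<le> Piter lam mu n t i j)"
proof (induction n arbitrary: i j T)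
  case 0
  then show ?case by simp
next
  case (Suc n)
  define h where "h r = lam * Piter lam mu n r (Suc i) j + mu * (\<Sum>k<i. Piter lam mu n r k j)" for r
  have ch: "continuous_on {0..T'} h" for T'
    unfolding h_def using Suc by (intro continuous_intros) auto
  have hn: "0 \<le> h r" if "r \<ge> 0" for r
    unfolding h_def using Suc assms that by (intro add_nonneg_nonneg mult_nonneg_nonneg sum_nonneg) auto
  have e': "Piter lam mu (Suc n) t i j = (if i = j then exp (- qtot lam mu i * t) else 0) + Phi (qtot lam mu i) h t" for t
    unfolding h_def by (rule Piter_Suc)
  have e: "(\<lambda>t. Piter lam mu (Suc n) t i j) = (\<lambda>t. (if i = j then exp (- qtot lam mu i * t) else 0) + Phi (qtot lam mu i) h t)"
    using e' by auto
  show ?case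
    unfolding e
  proof (intro conjI allI impI)
    show "continuous_on {0..T} (\<lambda>t. (if i = j then exp (- qtot lam mu i * t) else 0) + Phi (qtot lam mu i) h t)"
      by (cases "i = j") (auto intro!: continuous_intros Phi_cont ch)
    fix t :: real assume "t \<ge> 0"
    have "0 \<le> Phi (qtot lam mu i) h t" by (rule Phi_nonneg[OF ch]) (auto intro: hn)
    then show "0 \<le> Piter lam mu (Suc n) t i j" unfolding e' by simp
  qed
qed

lemma Piter_mono:
  assumes "lam > 0" "mu > 0"
  shows "t \<ge> 0 \<Longrightarrow> Piter lam mu n t i j \<le> Piter lam mu (Suc n) t i j"
proof (induction n arbitrary: i j t)
  case 0
  then show ?case using Piter_props[OF assms, of _ "Suc 0"] by simp
next
  case (Suc n)
  define h where "h n r = lam * Piter lam mu n r (Suc i) j + mu * (\<Sum>k<i. Piter lam mu n r k j)" for n r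
  have ch: "continuous_on {0..t} (h n')" for n'
    unfolding h_def using Piter_props[OF assms] by (intro continuous_intros) auto
  have "h n r \<le> h (Suc n) r" if "r \<in> {0..t}" for r
    unfolding h_def using Suc that assms
    by (intro add_mono mult_left_mono sum_mono) auto
  then have "Phi (qtot lam mu i) (h n) t \<le> Phi (qtot lam mu i) (h (Suc n)) t"
    by (intro Phi_mono ch)
  moreover have "Piter lam mu (Suc (Suc n)) t i j = (if i = j then exp (- qtot lam mu i * t) else 0) + Phi (qtot lam mu i) (h (Suc n)) t"
    unfolding h_def by (rule Piter_Suc)
  moreover have "Piter lam mu (Suc n) t i j = (if i = j then exp (- qtot lam mu i * t) else 0) + Phi (qtot lam mu i) (h n) t"
    unfolding h_def by (rule Piter_Suc)
  ultimately show ?case by simp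
qed

definition pterm :: "real \<Rightarrow> nat \<Rightarrow> real \<Rightarrow> real" where
  "pterm lam r t = exp (- lam * t) * (lam * t) ^ r / fact r"

definition Pk :: "real \<Rightarrow> nat \<Rightarrow> real \<Rightarrow> real" where
  "Pk lam k t = 1 - (\<Sum>r<k. pterm lam r t)"

lemma pterm_deriv:
  "(pterm lam r has_real_derivative (- lam * pterm lam r t + (if r = 0 then 0 else lam * pterm lam (r - 1) t))) (at t)"
proof (cases r)
  case 0
  then show ?thesis unfolding pterm_def by (auto intro!: derivative_eq_intros)
next
  case (Suc r')
  define c where "c = lam ^ Suc r' / fact (Suc r')"
  have e: "pterm lam r = (\<lambda>t. c * (exp (- lam * t) * t ^ Suc r'))"
    unfolding pterm_def c_def Suc by (auto simp: power_mult_distrib)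
  have "((\<lambda>t. c * (exp (- lam * t) * t ^ Suc r')) has_real_derivative
      c * (- lam * exp (- lam * t) * t ^ Suc r' + exp (- lam * t) * (real (Suc r') * t ^ r'))) (at t)"
    by (rule derivative_eq_intros refl | simp add: algebra_simps)+
  moreover have "c * (- lam * exp (- lam * t) * t ^ Suc r') = - lam * pterm lam r t"
    unfolding c_def pterm_def Suc by (simp add: power_mult_distrib)
  moreover have "c * (exp (- lam * t) * (real (Suc r') * t ^ r')) = lam * pterm lam r' t"
  proof -
    have f: "fact (Suc r') = real (Suc r') * (fact r' :: real)" by simp
    have "c * (real (Suc r')) = lam * lam ^ r' / fact r'"
      unfolding c_def f by (simp del: of_nat_Suc)
    then show ?thesis unfolding pterm_def
      by (simp add: power_mult_distrib) (metis (no_types, lifting) mult.commute mult.left_commute times_divide_eq_left)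
  qed
  ultimately show ?thesis unfolding e using Suc by (simp add: algebra_simps)
qed

lemma Pk_deriv:
  "(Pk lam k has_real_derivative (if k = 0 then 0 else lam * pterm lam (k - 1) t)) (at t)"
proof (induction k)
  case 0
  then show ?case unfolding Pk_def by (auto intro!: derivative_eq_intros)
next
  case (Suc k)
  have e: "Pk lam (Suc k) = (\<lambda>t. Pk lam k t - pterm lam k t)"
    unfolding Pk_def by auto
  show ?case unfolding e
    by (rule derivative_eq_intros Suc pterm_deriv)+ (auto)
qed

lemma Pk_diff: "Pk lam (k - 1) t - Pk lam k t = (if k = 0 then 0 else pterm lam (k - 1) t)"
  by (cases k) (auto simp: Pk_def)

lemma pterm_nonneg: "lam > 0 \<Longrightarrow> t \<ge> 0 \<Longrightarrow> 0 \<le> pterm lam r t"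
  unfolding pterm_def by simp

lemma Pk_nonneg:
  assumes "lam > 0" "t \<ge> 0"
  shows "0 \<le> Pk lam k t"
proof -
  have "(\<Sum>r<k. (lam * t) ^ r / fact r) \<le> exp (lam * t)"
    using sum_le_suminf[OF sums_summable[OF exp_sums_real[of "lam * t"]], of "{..<k}"]
      sums_unique[OF exp_sums_real[of "lam * t"]] assms by simp
  then have "exp (- lam * t) * (\<Sum>r<k. (lam * t) ^ r / fact r) \<le> exp (- lam * t) * exp (lam * t)"
    by (intro mult_left_mono) auto
  then show ?thesis unfolding Pk_def pterm_def
    by (simp add: sum_distrib_left flip: exp_add)
qed

lemma Pk_antimono:
  assumes "lam > 0" "t \<ge> 0" "k \<le> k'"
  shows "Pk lam k' t \<le> Pk lam k t"
proof -
  have "(\<Sum>r<k. pterm lam r t) \<le> (\<Sum>r<k'. pterm lam r t)"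
    by (rule sum_mono2) (use assms pterm_nonneg in auto)
  then show ?thesis unfolding Pk_def by simp
qed

lemma Pk_lim:
  assumes "lam > 0"
  shows "(\<lambda>k. Pk lam k t) \<longlonglongrightarrow> 0"
proof -
  have "(\<lambda>k. \<Sum>r<k. (lam * t) ^ r / fact r) \<longlonglongrightarrow> exp (lam * t)"
    using exp_sums_real sums_def by blast
  then have "(\<lambda>k. 1 - exp (- lam * t) * (\<Sum>r<k. (lam * t) ^ r / fact r)) \<longlonglongrightarrow> 1 - exp (- lam * t) * exp (lam * t)"
    by (intro tendsto_intros)
  then show ?thesis unfolding Pk_def pterm_def
    by (simp add: sum_distrib_left flip: exp_add)
qed

lemma Pk_duhamel:
  assumes "lam > 0" "mu > 0" "t \<ge> 0"
  shows "Pk lam k t = exp (- qtot lam mu i * t) * Pk lam k 0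
     + Phi (qtot lam mu i) (\<lambda>r. lam * Pk lam (k - 1) r + real i * mu * Pk lam k r) t"
proof (rule duhamel[OF _ _ assms(3)])
  fix x
  have "(if k = 0 then 0 else lam * pterm lam (k - 1) x) =
     - qtot lam mu i * Pk lam k x + (lam * Pk lam (k - 1) x + real i * mu * Pk lam k x)"
    using Pk_diff[of lam k x] unfolding qtot_def by (auto simp: algebra_simps)
  then show "(Pk lam k has_real_derivative - qtot lam mu i * Pk lam k x + (lam * Pk lam (k - 1) x + real i * mu * Pk lam k x)) (at x)"
    using Pk_deriv[of lam k x] by simp
next
  show "continuous_on {0..t} (\<lambda>r. lam * Pk lam (k - 1) r + real i * mu * Pk lam k r)"
    unfolding Pk_def pterm_def by (intro continuous_intros) auto
qed


lemma Lam_bounds: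
  assumes "lam > 0" "mu > 0" "t \<ge> 0"
  shows "0 \<le> Lam lam mu t" "Lam lam mu t \<le> lam / mu"
proof -
  have "exp (- mu * t) \<le> 1" "exp (- mu * t) > 0" using assms by auto
  then show "0 \<le> Lam lam mu t" "Lam lam mu t \<le> lam / mu"
    unfolding Lam_def using assms by (auto intro!: mult_nonneg_nonneg simp: mult_le_cancel_left1 divide_right_mono)
qed

lemma bb_nonneg:
  assumes "lam > 0" "mu > 0" "t \<ge> 0"
  shows "0 \<le> bb lam mu r k t"
  unfolding bb_def using Lam_bounds[OF assms] by simp

lemma bb_le:
  assumes "lam > 0" "mu > 0" "t \<ge> 0"
  shows "bb lam mu r k t \<le> (lam / mu) ^ r / fact r"
proof -
  have "0 \<le> mu * real k" using assms by simp
  then have "0 \<le> lam + mu * real k" using assms by linarith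
  then have "0 \<le> (lam + mu * real k) * t" using assms(3) by (rule mult_nonneg_nonneg)
  then have "(- (lam + mu * real k) * t) \<le> 0" by linarith
  then have "exp (- (lam + mu * real k) * t) \<le> 1" by simp
  moreover have "Lam lam mu t ^ r \<le> (lam / mu) ^ r"
    using Lam_bounds[OF assms] by (intro power_mono) auto
  ultimately have "exp (- (lam + mu * real k) * t) * Lam lam mu t ^ r \<le> 1 * (lam / mu) ^ r"
    using Lam_bounds[OF assms] by (intro mult_mono) auto
  then show ?thesis unfolding bb_def by (simp add: divide_right_mono)
qed

lemma ee_abs: "th > 0 \<Longrightarrow> \<bar>ee th k i\<bar> \<le> 1"
  unfolding ee_def using Gs_nonneg[of th k] Gs_le1[of th k] by auto

definition CV :: "real \<Rightarrow> real \<Rightarrow> nat \<Rightarrow> real" where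
  "CV lam mu n = 1 + (\<Sum>k\<in>{1..n}. (lam / mu) ^ (n - k) / fact (n - k))"

lemma V_bound:
  assumes "lam > 0" "mu > 0" "t \<ge> 0"
  shows "\<bar>V lam mu n t i\<bar> \<le> CV lam mu n"
proof -
  have th: "lam / mu > 0" using assms by simp
  have "\<bar>V lam mu n t i\<bar> \<le> \<bar>Gs (lam/mu) n\<bar> + (\<Sum>k\<in>{1..n}. \<bar>bb lam mu (n - k) k t * ee (lam/mu) k i\<bar>)"
    unfolding V_def by (rule order.trans[OF abs_triangle_ineq add_left_mono[OF sum_abs]])
  also have "\<dots> \<le> 1 + (\<Sum>k\<in>{1..n}. (lam / mu) ^ (n - k) / fact (n - k))"
  proof (intro add_mono sum_mono)
    show "\<bar>Gs (lam / mu) n\<bar> \<le> 1" using Gs_nonneg[OF th] Gs_le1[OF th] by auto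
    fix k
    have "\<bar>bb lam mu (n - k) k t * ee (lam/mu) k i\<bar> = bb lam mu (n - k) k t * \<bar>ee (lam/mu) k i\<bar>"
      using bb_nonneg[OF assms] by (simp add: abs_mult)
    also have "\<dots> \<le> (lam / mu) ^ (n - k) / fact (n - k) * 1"
      using bb_nonneg[OF assms] bb_le[OF assms] ee_abs[OF th] th by (intro mult_mono) auto
    finally show "\<bar>bb lam mu (n - k) k t * ee (lam/mu) k i\<bar> \<le> (lam / mu) ^ (n - k) / fact (n - k)" by simp
  qed
  finally show ?thesis unfolding CV_def .
qed

lemma Fc_bound:
  assumes "lam > 0" "mu > 0" "t \<ge> 0"
  shows "\<bar>Fc lam mu t i j\<bar> \<le> CV lam mu j + CV lam mu (Suc j)"
  unfolding Fc_def using V_bound[OF assms, of j i] V_bound[OF assms, of "Suc j" i] by linarith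

definition kk :: "nat \<Rightarrow> nat \<Rightarrow> nat" where "kk n i = (n - i) div 2"

lemma kk_up: "kk (Suc n) i - 1 \<le> kk n (Suc i)"
  unfolding kk_def by (simp add: div_le_mono le_diff_conv2) 

lemma kk_down: "k < i \<Longrightarrow> kk (Suc n) i \<le> kk n k"
  unfolding kk_def by (intro div_le_mono) linarith

lemma kk_lim: "filterlim (\<lambda>n. kk n i) at_top sequentially"
  unfolding filterlim_at_top eventually_sequentially
proof
  fix Z :: nat
  show "\<exists>N. \<forall>n\<ge>N. Z \<le> kk n i"
    by (rule exI[of _ "2 * Z + i"]) (auto simp: kk_def)
qed


lemma defect:
  assumes "lam > 0" "mu > 0"
  shows "t \<ge> 0 \<Longrightarrow> \<bar>Fc lam mu t i j - Piter lam mu n t i j\<bar>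
     \<le> (CV lam mu j + CV lam mu (Suc j)) * Pk lam (kk n i) t"
proof (induction n arbitrary: i t)
  case 0
  then show ?case using Fc_bound[OF assms] by (simp add: Pk_def kk_def)
next
  case (Suc n)
  define C where "C = CV lam mu j + CV lam mu (Suc j)"
  have C0: "0 \<le> C" using Fc_bound[OF assms order.refl, of 0 j] unfolding C_def by linarith
  define q where "q = qtot lam mu i"
  define \<kappa> where "\<kappa> = kk (Suc n) i"
  define hF where "hF r = lam * Fc lam mu r (Suc i) j + mu * (\<Sum>k<i. Fc lam mu r k j)" for r
  define hP where "hP r = lam * Piter lam mu n r (Suc i) j + mu * (\<Sum>k<i. Piter lam mu n r k j)" for r
  define hB where "hB r = lam * Pk lam (\<kappa> - 1) r + real i * mu * Pk lam \<kappa> r" for r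
  have cF: "continuous_on {0..t} hF" unfolding hF_def by (intro continuous_intros cont_Fc)
  have cP: "continuous_on {0..t} hP" unfolding hP_def using Piter_props[OF assms]
    by (intro continuous_intros) auto
  have cB: "continuous_on {0..t} hB" unfolding hB_def Pk_def pterm_def
    by (intro continuous_intros) auto
  have cD: "continuous_on {0..t} (\<lambda>r. hF r - hP r)" by (intro continuous_intros cF cP)
  have cDa: "continuous_on {0..t} (\<lambda>r. \<bar>hF r - hP r\<bar>)" by (intro continuous_intros cD)
  have cCB: "continuous_on {0..t} (\<lambda>r. C * hB r)" by (intro continuous_intros cB)
  have pt: "\<bar>hF r - hP r\<bar> \<le> C * hB r" if r: "r \<in> {0..t}" for r
  proof -
    have r0: "r \<ge> 0" using r by auto
    have "hF r - hP r = lam * (Fc lam mu r (Suc i) j - Piter lam mu n r (Suc i) j)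
       + mu * (\<Sum>k<i. Fc lam mu r k j - Piter lam mu n r k j)"
      unfolding hF_def hP_def by (simp add: algebra_simps sum_subtractf)
    then have "\<bar>hF r - hP r\<bar> \<le> lam * \<bar>Fc lam mu r (Suc i) j - Piter lam mu n r (Suc i) j\<bar>
       + mu * (\<Sum>k<i. \<bar>Fc lam mu r k j - Piter lam mu n r k j\<bar>)"
    proof -
      have "\<bar>(\<Sum>k<i. Fc lam mu r k j - Piter lam mu n r k j)\<bar> \<le> (\<Sum>k<i. \<bar>Fc lam mu r k j - Piter lam mu n r k j\<bar>)"
        by (rule sum_abs)
      then have "mu * \<bar>(\<Sum>k<i. Fc lam mu r k j - Piter lam mu n r k j)\<bar> \<le> mu * (\<Sum>k<i. \<bar>Fc lam mu r k j - Piter lam mu n r k j\<bar>)"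
        using assms by (intro mult_left_mono) auto
      then show ?thesis using assms unfolding \<open>hF r - hP r = _\<close>
        by (simp add: abs_mult order.trans[OF abs_triangle_ineq])
    qed
    also have "\<dots> \<le> lam * (C * Pk lam (\<kappa> - 1) r) + mu * (\<Sum>k<i. C * Pk lam \<kappa> r)"
    proof (intro add_mono mult_left_mono sum_mono)
      have "\<bar>Fc lam mu r (Suc i) j - Piter lam mu n r (Suc i) j\<bar> \<le> C * Pk lam (kk n (Suc i)) r"
        using Suc.IH[OF r0] unfolding C_def .
      also have "\<dots> \<le> C * Pk lam (\<kappa> - 1) r"
        using C0 Pk_antimono[OF assms(1) r0 kk_up[of n i]] unfolding \<kappa>_def
        by (intro mult_left_mono) auto
      finally show "\<bar>Fc lam mu r (Suc i) j - Piter lam mu n r (Suc i) j\<bar> \<le> C * Pk lam (\<kappa> - 1) r" .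
      fix k assume "k \<in> {..<i}"
      then have "k < i" by auto
      have "\<bar>Fc lam mu r k j - Piter lam mu n r k j\<bar> \<le> C * Pk lam (kk n k) r"
        using Suc.IH[OF r0] unfolding C_def .
      also have "\<dots> \<le> C * Pk lam \<kappa> r"
        using C0 Pk_antimono[OF assms(1) r0 kk_down[OF \<open>k < i\<close>, of n]] unfolding \<kappa>_def
        by (intro mult_left_mono) auto
      finally show "\<bar>Fc lam mu r k j - Piter lam mu n r k j\<bar> \<le> C * Pk lam \<kappa> r" .
    qed (use assms in auto)
    also have "\<dots> = C * hB r" unfolding hB_def by (simp add: algebra_simps)
    finally show ?thesis .
  qed
  have "Fc lam mu t i j - Piter lam mu (Suc n) t i j = Phi q hF t - Phi q hP t"
    unfolding Fc_fix[OF assms Suc.prems, of i j] Piter_Suc q_def hF_def hP_def by simp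
  also have "\<dots> = Phi q (\<lambda>r. hF r - hP r) t" by (rule Phi_diff[OF cF cP, symmetric])
  finally have "\<bar>Fc lam mu t i j - Piter lam mu (Suc n) t i j\<bar> \<le> Phi q (\<lambda>r. \<bar>hF r - hP r\<bar>) t"
    using Phi_abs[OF cD] by simp
  also have "\<dots> \<le> Phi q (\<lambda>r. C * hB r) t" by (rule Phi_mono[OF cDa cCB pt])
  also have "\<dots> = C * Phi q hB t" by (rule Phi_cmult)
  also have "Phi q hB t = Pk lam \<kappa> t - exp (- q * t) * Pk lam \<kappa> 0"
    using Pk_duhamel[OF assms Suc.prems, of \<kappa> i] unfolding q_def hB_def by simp
  also have "C * (Pk lam \<kappa> t - exp (- q * t) * Pk lam \<kappa> 0) \<le> C * Pk lam \<kappa> t"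
    using C0 Pk_nonneg[OF assms(1) order.refl, of \<kappa>]
    by (intro mult_left_mono) auto
  finally show ?case unfolding C_def \<kappa>_def .
qed

lemma Piter_lim:
  assumes "lam > 0" "mu > 0" "t \<ge> 0"
  shows "(\<lambda>n. Piter lam mu n t i j) \<longlonglongrightarrow> Fc lam mu t i j"
proof -
  define C where "C = CV lam mu j + CV lam mu (Suc j)"
  have "(\<lambda>n. Pk lam (kk n i) t) \<longlonglongrightarrow> 0"
    by (rule filterlim_compose[OF Pk_lim[OF assms(1)] kk_lim])
  then have l: "(\<lambda>n. C * Pk lam (kk n i) t) \<longlonglongrightarrow> 0"
    using tendsto_mult_right_zero by blast
  have "(\<lambda>n. Fc lam mu t i j - Piter lam mu n t i j) \<longlonglongrightarrow> 0"
    by (rule Lim_null_comparison[OF _ l]) (use defect[OF assms(1,2) assms(3)] in \<open>auto simp: C_def\<close>)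
  then have "(\<lambda>n. Fc lam mu t i j - (Fc lam mu t i j - Piter lam mu n t i j)) \<longlonglongrightarrow> Fc lam mu t i j - 0"
    by (intro tendsto_intros)
  then show ?thesis by simp
qed

lemma ptrans_eq:
  assumes "lam > 0" "mu > 0" "t \<ge> 0"
  shows "ptrans lam mu t i j = Fc lam mu t i j"
proof -
  have inc: "incseq (\<lambda>n. Piter lam mu n t i j)"
    by (rule incseq_SucI) (use Piter_mono[OF assms(1,2) assms(3)] in auto)
  have le: "Piter lam mu n t i j \<le> Fc lam mu t i j" for n
    by (rule incseq_le[OF inc Piter_lim[OF assms]])
  have "bdd_above (range (\<lambda>n. Piter lam mu n t i j))"
    using le by (auto intro!: bdd_aboveI)
  from LIMSEQ_incseq_SUP[OF this inc] have "(\<lambda>n. Piter lam mu n t i j) \<longlonglongrightarrow> ptrans lam mu t i j"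
    unfolding ptrans_def .
  then show ?thesis using Piter_lim[OF assms] LIMSEQ_unique by blast
qed

lemma Fc_nonneg:
  assumes "lam > 0" "mu > 0" "t \<ge> 0"
  shows "0 \<le> Fc lam mu t i j"
  using LIMSEQ_le_const[OF Piter_lim[OF assms]] Piter_props[OF assms(1,2)] assms(3) by blast


lemma infsum_suminf_norm:
  fixes g :: "nat \<Rightarrow> real"
  assumes "summable (\<lambda>n. norm (g n))"
  shows "infsum g UNIV = suminf g" "g summable_on UNIV"
proof -
  have "(g has_sum suminf g) UNIV"
    by (rule norm_summable_imp_has_sum[OF assms summable_sums[OF summable_norm_cancel[OF assms]]])
  then show "infsum g UNIV = suminf g" "g summable_on UNIV" by (auto simp: infsumI summable_on_def)
qed

lemma summable_on_imp_sums_infsum: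
  fixes g :: "nat \<Rightarrow> real"
  assumes "g summable_on UNIV"
  shows "g sums infsum g UNIV"
  using has_sum_imp_sums[OF has_sum_infsum[OF assms]] .

lemma diag_bij: "bij_betw (\<lambda>(n, k). (k, n - k)) (Sigma UNIV (\<lambda>n. {..n})) (UNIV \<times> (UNIV :: nat set))"
  by (rule bij_betw_byWitness[where f' = "\<lambda>(k, r). (k + r, k)"]) auto

lemma diag_reindex:
  fixes F :: "nat \<times> nat \<Rightarrow> real"
  assumes "F summable_on UNIV \<times> UNIV"
  shows "(\<lambda>n. \<Sum>k\<le>n. F (k, n - k)) sums infsum F (UNIV \<times> UNIV)"
proof -
  have s: "(\<lambda>x. F ((\<lambda>(n, k). (k, n - k)) x)) summable_on Sigma UNIV (\<lambda>n. {..n})"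
    using summable_on_reindex_bij_betw[OF diag_bij] assms by blast
  have i: "infsum (\<lambda>x. F ((\<lambda>(n, k). (k, n - k)) x)) (Sigma UNIV (\<lambda>n. {..n})) = infsum F (UNIV \<times> UNIV)"
    by (rule infsum_reindex_bij_betw[OF diag_bij])
  have s': "(\<lambda>(n, k). F (k, n - k)) summable_on Sigma UNIV (\<lambda>n. {..n})"
    using s by (simp add: case_prod_unfold)
  have "infsum (\<lambda>n. infsum (\<lambda>k. F (k, n - k)) {..n}) UNIV = infsum (\<lambda>(n, k). F (k, n - k)) (Sigma UNIV (\<lambda>n. {..n}))"
    by (rule infsum_Sigma'_banach[OF s'])
  moreover have "(\<lambda>n. infsum (\<lambda>k. F (k, n - k)) {..n}) summable_on UNIV"
    by (rule summable_on_Sigma_banach[OF s'])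
  ultimately have "(\<lambda>n. \<Sum>k\<le>n. F (k, n - k)) summable_on UNIV"
    "infsum (\<lambda>n. \<Sum>k\<le>n. F (k, n - k)) UNIV = infsum F (UNIV \<times> UNIV)"
    using i by (simp_all add: case_prod_unfold)
  then show ?thesis using summable_on_imp_sums_infsum by metis
qed

lemma diag_fubini:
  fixes f :: "nat \<Rightarrow> nat \<Rightarrow> real"
  assumes h1: "\<And>k. summable (\<lambda>r. \<bar>f k r\<bar>)" and h2: "summable (\<lambda>k. \<Sum>r. \<bar>f k r\<bar>)"
  shows "(\<lambda>n. \<Sum>k\<le>n. f k (n - k)) sums (\<Sum>k. \<Sum>r. f k r)"
    and "summable (\<lambda>n. \<Sum>k\<le>n. \<bar>f k (n - k)\<bar>)"
proof -
  define F where "F = (\<lambda>(k, r). f k r)"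
  have sec: "(\<lambda>r. norm (f k r)) summable_on UNIV" for k
    using summable_nonneg_imp_summable_on[OF h1] by simp
  have isec: "infsum (\<lambda>r. \<bar>f k r\<bar>) UNIV = (\<Sum>r. \<bar>f k r\<bar>)" for k
    using infsum_suminf_norm[of "\<lambda>r. \<bar>f k r\<bar>"] h1 by simp
  have c1: "\<forall>k\<in>UNIV. (\<lambda>y. norm (F (k, y))) summable_on UNIV" using sec by (simp add: F_def)
  have "(\<lambda>k. norm (\<Sum>r. \<bar>f k r\<bar>)) summable_on UNIV"
    using summable_nonneg_imp_summable_on[of "\<lambda>k. norm (\<Sum>r. \<bar>f k r\<bar>)"] h2
      suminf_nonneg[OF h1] by simp
  then have c2: "(\<lambda>x. norm (\<Sum>\<^sub>\<infinity>y\<in>UNIV. norm (F (x, y)))) summable_on UNIV"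
    by (simp add: F_def isec)
  have abs: "(\<lambda>x. norm (F x)) summable_on UNIV \<times> UNIV"
    using Infinite_Sum.abs_summable_on_Sigma_iff[where f=F and A=UNIV and B="\<lambda>_. UNIV"] c1 c2 by blast
  have sF: "F summable_on UNIV \<times> UNIV" by (rule abs_summable_summable[OF abs])
  have sFa: "(\<lambda>x. \<bar>F x\<bar>) summable_on UNIV \<times> UNIV" using abs by simp
  have secs: "(\<lambda>r. f k r) summable_on UNIV" for k
    using infsum_suminf_norm[of "\<lambda>r. f k r"] h1 by simp
  have "infsum F (UNIV \<times> UNIV) = infsum (\<lambda>k. infsum (\<lambda>r. f k r) UNIV) UNIV"
    using infsum_Sigma'_banach[of f UNIV "\<lambda>_. UNIV"] sF by (simp add: F_def)
  also have "\<dots> = infsum (\<lambda>k. \<Sum>r. f k r) UNIV"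
    using infsum_suminf_norm[of "\<lambda>r. f k r" for k] h1 by simp
  also have "\<dots> = (\<Sum>k. \<Sum>r. f k r)"
  proof (rule infsum_suminf_norm(1))
    show "summable (\<lambda>k. norm (\<Sum>r. f k r))"
      by (rule summable_comparison_test'[OF h2]) (auto intro!: summable_rabs[OF h1])
  qed
  finally have e: "infsum F (UNIV \<times> UNIV) = (\<Sum>k. \<Sum>r. f k r)" .
  show "(\<lambda>n. \<Sum>k\<le>n. f k (n - k)) sums (\<Sum>k. \<Sum>r. f k r)"
    using diag_reindex[OF sF] unfolding e by (simp add: F_def)
  show "summable (\<lambda>n. \<Sum>k\<le>n. \<bar>f k (n - k)\<bar>)"
    using diag_reindex[OF sFa] by (simp add: F_def sums_summable)
qed


lemma tail_identity:
  fixes A w :: "nat \<Rightarrow> real"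
  shows "(\<Sum>j<N. (\<Sum>n<Suc j. w n) * (A j - A (Suc j))) = (\<Sum>n<N. w n * (A n - A N))"
proof (induction N)
  case (Suc N)
  have "(\<Sum>n<N. w n * (A n - A (Suc N))) = (\<Sum>n<N. w n * (A n - A N) + w n * (A N - A (Suc N)))"
    by (rule sum.cong) (auto simp: algebra_simps)
  also have "\<dots> = (\<Sum>n<N. w n * (A n - A N)) + (\<Sum>n<N. w n) * (A N - A (Suc N))"
    by (simp only: sum.distrib sum_distrib_right)
  finally have "(\<Sum>n<Suc N. w n * (A n - A (Suc N))) =
      (\<Sum>n<N. w n * (A n - A N)) + (\<Sum>n<Suc N. w n) * (A N - A (Suc N))"
    by (simp add: algebra_simps)
  then show ?case using Suc by simp
qed simp

lemma tail_sum:
  fixes A w :: "nat \<Rightarrow> real"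
  assumes dec: "\<And>j. A (Suc j) \<le> A j" and lim: "A \<longlonglongrightarrow> 0" and w0: "\<And>n. 0 \<le> w n"
  shows "summable (\<lambda>n. w n * A n) \<Longrightarrow>
           (\<lambda>j. (\<Sum>n<Suc j. w n) * (A j - A (Suc j))) sums (\<Sum>n. w n * A n)"
    and "summable (\<lambda>j. (\<Sum>n<Suc j. w n) * (A j - A (Suc j))) \<Longrightarrow> summable (\<lambda>n. w n * A n)"
proof -
  have decm: "A j \<le> A i" if "i \<le> j" for i j
    using dec that by (rule lift_Suc_antimono_le)
  have A0: "0 \<le> A n" for n
    using decm by (intro LIMSEQ_le_const2[OF lim]) (auto intro!: exI[of _ n])
  define p where "p j = (\<Sum>n<Suc j. w n) * (A j - A (Suc j))" for j
  have p0: "0 \<le> p j" for j unfolding p_def using dec w0 by (intro mult_nonneg_nonneg sum_nonneg) auto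
  have P: "(\<Sum>j<N. p j) = (\<Sum>n<N. w n * (A n - A N))" for N
    unfolding p_def by (rule tail_identity)
  have low: "(\<Sum>n<M. w n * (A n - A N)) \<le> (\<Sum>j<N. p j)" if "M \<le> N" for M N
    unfolding P
  proof (rule sum_mono2)
    show "{..<M} \<subseteq> {..<N}" using that by auto
    fix n assume "n \<in> {..<N} - {..<M}"
    then have "n \<le> N" by auto
    then have "A N \<le> A n" by (rule decm)
    then show "0 \<le> w n * (A n - A N)" using w0[of n] by simp
  qed simp
  have limM: "(\<lambda>N. \<Sum>n<M. w n * (A n - A N)) \<longlonglongrightarrow> (\<Sum>n<M. w n * (A n - 0))" for M
    by (intro tendsto_intros lim)
  {
    assume s: "summable (\<lambda>n. w n * A n)"
    have up: "(\<Sum>j<N. p j) \<le> (\<Sum>n. w n * A n)" for N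
    proof -
      have "(\<Sum>j<N. p j) \<le> (\<Sum>n<N. w n * A n)"
        unfolding P using w0 A0 by (intro sum_mono mult_left_mono) auto
      also have "\<dots> \<le> (\<Sum>n. w n * A n)"
        using w0 A0 by (intro sum_le_suminf[OF s]) auto
      finally show ?thesis .
    qed
    have sp: "summable p" by (rule summableI_nonneg_bounded[OF p0 up])
    have "suminf p \<le> (\<Sum>n. w n * A n)" by (rule suminf_le_const[OF sp up])
    moreover have "(\<Sum>n. w n * A n) \<le> suminf p"
    proof (rule suminf_le_const[OF s])
      fix M
      have "eventually (\<lambda>N. (\<Sum>n<M. w n * (A n - A N)) \<le> (\<Sum>j<N. p j)) sequentially"
        unfolding eventually_sequentially using low by blast
      then have "(\<Sum>n<M. w n * (A n - 0)) \<le> suminf p"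
        by (rule tendsto_le[OF trivial_limit_sequentially summable_LIMSEQ[OF sp] limM[of M]])
      then show "(\<Sum>n<M. w n * A n) \<le> suminf p" by simp
    qed
    ultimately have "p sums (\<Sum>n. w n * A n)" using sp summable_sums by fastforce
    then show "(\<lambda>j. (\<Sum>n<Suc j. w n) * (A j - A (Suc j))) sums (\<Sum>n. w n * A n)"
      unfolding p_def .
  }
  {
    assume "summable (\<lambda>j. (\<Sum>n<Suc j. w n) * (A j - A (Suc j)))"
    then have sp: "summable p" unfolding p_def .
    have "(\<Sum>n<M. w n * A n) \<le> suminf p" for M
    proof -
      have "eventually (\<lambda>N. (\<Sum>n<M. w n * (A n - A N)) \<le> suminf p) sequentially"
        unfolding eventually_sequentially
      proof (intro exI allI impI)
        fix N assume "M \<le> N"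
        have "(\<Sum>j<N. p j) \<le> suminf p" by (rule sum_le_suminf[OF sp]) (use p0 in auto)
        then show "(\<Sum>n<M. w n * (A n - A N)) \<le> suminf p" using low[OF \<open>M \<le> N\<close>] by linarith
      qed
      then have "(\<Sum>n<M. w n * (A n - 0)) \<le> suminf p"
        by (rule tendsto_le[OF trivial_limit_sequentially tendsto_const limM[of M]])
      then show ?thesis by simp
    qed
    then show "summable (\<lambda>n. w n * A n)"
      using w0 A0 by (intro summableI_nonneg_bounded) auto
  }
qed


definition ww :: "nat \<Rightarrow> nat \<Rightarrow> real" where
  "ww m n = real n ^ m - real (n - 1) ^ m"

lemma ww_0[simp]: "ww m 0 = 0" by (simp add: ww_def)

lemma ww_sum: "m \<ge> 1 \<Longrightarrow> (\<Sum>n<Suc j. ww m n) = real j ^ m"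
  by (induction j) (auto simp: ww_def)

lemma ww_Suc_sum: "ww m (Suc n) = (\<Sum>i<m. real n ^ (m - Suc i) * real (Suc n) ^ i)"
  using power_diff_sumr2[of "real (Suc n)" m "real n"] by (simp add: ww_def)

lemma ww_nonneg: "0 \<le> ww m n"
  unfolding ww_def by (auto intro!: power_mono)

lemma ww_mono: "ww m n \<le> ww m (Suc n)"
proof (cases n)
  case 0
  then show ?thesis using ww_nonneg[of m 1] by simp
next
  case (Suc n')
  show ?thesis unfolding Suc ww_Suc_sum[of m n'] ww_Suc_sum[of m "Suc n'"]
    by (intro sum_mono mult_mono power_mono) auto
qed

lemma ww_mono': "n \<le> n' \<Longrightarrow> ww m n \<le> ww m n'"
  by (rule lift_Suc_mono_le[of "ww m"]) (auto intro: ww_mono)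

lemma ww_upper: "ww m n \<le> real m * real n ^ (m - 1)"
proof (cases n)
  case 0
  then show ?thesis by simp
next
  case (Suc n')
  have "ww m n \<le> (\<Sum>i<m. real n ^ (m - 1))"
    unfolding Suc ww_Suc_sum
  proof (intro sum_mono)
    fix i assume "i \<in> {..<m}"
    then have "real n' ^ (m - Suc i) * real (Suc n') ^ i \<le> real (Suc n') ^ (m - Suc i) * real (Suc n') ^ i"
      by (intro mult_right_mono power_mono) auto
    also have "\<dots> = real (Suc n') ^ (m - 1)"
      using \<open>i \<in> {..<m}\<close> by (simp flip: power_add)
    finally show "real n' ^ (m - Suc i) * real (Suc n') ^ i \<le> real (Suc n') ^ (m - 1)" .
  qed
  then show ?thesis using Suc by simp
qed

lemma ww_le_pow: "ww m n \<le> real n ^ m"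
  unfolding ww_def by simp

lemma ww_lower:
  assumes "n \<ge> 1" "m \<ge> 1"
  shows "real n ^ (m - 1) \<le> ww m n"
proof -
  obtain n' where n: "n = Suc n'" using assms by (cases n) auto
  have "real n' ^ (m - Suc (m - 1)) * real (Suc n') ^ (m - 1) \<le> (\<Sum>i<m. real n' ^ (m - Suc i) * real (Suc n') ^ i)"
    by (rule member_le_sum[of "m - 1"]) (use assms in auto)
  then show ?thesis unfolding n ww_Suc_sum using assms by simp
qed

lemma pow_le_exp:
  assumes "0 \<le> (y::real)"
  shows "y ^ a \<le> fact a * exp y"
proof -
  have "(\<Sum>n\<in>{a}. y ^ n / fact n) \<le> exp y"
    using sum_le_suminf[OF sums_summable[OF exp_sums_real[of y]], of "{a}"]
      sums_unique[OF exp_sums_real[of y]] assms by simp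
  then show ?thesis by (simp add: field_simps)
qed

lemma summable_poly_exp:
  assumes "0 \<le> c" "0 \<le> (x::real)"
  shows "summable (\<lambda>r. (c + real r) ^ a * (x ^ r / fact r))"
proof (rule summable_comparison_test')
  show "summable (\<lambda>r. fact a * exp c * ((exp 1 * x) ^ r / fact r))"
    by (intro summable_mult sums_summable[OF exp_sums_real])
  fix r
  have "(c + real r) ^ a \<le> fact a * exp (c + real r)"
    using assms by (intro pow_le_exp) auto
  also have "\<dots> = fact a * exp c * exp 1 ^ r"
    by (simp add: exp_add exp_of_nat_mult[symmetric] mult_ac)
  finally have "(c + real r) ^ a * (x ^ r / fact r) \<le> fact a * exp c * exp 1 ^ r * (x ^ r / fact r)"
    using assms by (intro mult_right_mono) auto
  then show "norm ((c + real r) ^ a * (x ^ r / fact r)) \<le> fact a * exp c * ((exp 1 * x) ^ r / fact r)"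
    using assms by (simp add: power_mult_distrib mult_ac)
qed

lemma summable_ww_exp:
  assumes "0 \<le> (x::real)"
  shows "summable (\<lambda>r. ww m (k + r) * (x ^ r / fact r))"
proof (rule summable_comparison_test')
  show "summable (\<lambda>r. (real k + real r) ^ m * (x ^ r / fact r))"
    using summable_poly_exp[of "real k" x m] assms by simp
  fix r
  show "norm (ww m (k + r) * (x ^ r / fact r)) \<le> (real k + real r) ^ m * (x ^ r / fact r)"
  proof -
    have "ww m (k + r) * (x ^ r / fact r) \<le> (real k + real r) ^ m * (x ^ r / fact r)"
      using ww_le_pow[of m "k + r"] assms by (intro mult_right_mono) auto
    then show ?thesis using ww_nonneg[of m "k + r"] assms by simp
  qed
qed

lemma binom_exp_sum:
  fixes x y :: real
  shows "(\<Sum>i\<le>k. x ^ i / fact i * (y ^ (k - i) / fact (k - i))) = (x + y) ^ k / fact k"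
proof -
  have "(x + y) ^ k / fact k = (\<Sum>i\<le>k. of_nat (k choose i) * x ^ i * y ^ (k - i)) / fact k"
    by (subst binomial_ring) simp
  also have "\<dots> = (\<Sum>i\<le>k. of_nat (k choose i) * x ^ i * y ^ (k - i) / fact k)"
    by (simp add: sum_divide_distrib)
  also have "\<dots> = (\<Sum>i\<le>k. x ^ i / fact i * (y ^ (k - i) / fact (k - i)))"
    by (rule sum.cong) (auto simp: binomial_fact)
  finally show ?thesis ..
qed

lemma pois_mono:
  fixes f :: "nat \<Rightarrow> real"
  assumes f0: "\<And>n. 0 \<le> f n" and fm: "\<And>n. f n \<le> f (Suc n)"
    and L: "0 \<le> L" and e: "0 \<le> e"
    and s: "summable (\<lambda>r. f r * ((L + e) ^ r / fact r))"
  shows "summable (\<lambda>r. f r * (L ^ r / fact r))"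
    and "(\<Sum>r. f r * (L ^ r / fact r)) * exp e \<le> (\<Sum>r. f r * ((L + e) ^ r / fact r))"
proof -
  have fmono: "f i \<le> f k" if "i \<le> k" for i k using fm that by (rule lift_Suc_mono_le)
  have sa: "summable (\<lambda>r. norm (f r * (L ^ r / fact r)))"
  proof (rule summable_comparison_test'[OF s])
    fix r show "norm (norm (f r * (L ^ r / fact r))) \<le> f r * ((L + e) ^ r / fact r)"
      using f0 L e by (auto intro!: mult_left_mono divide_right_mono power_mono simp: abs_mult)
  qed
  then show "summable (\<lambda>r. f r * (L ^ r / fact r))" by (rule summable_norm_cancel)
  have sb: "summable (\<lambda>r. norm (e ^ r / fact r))"
    using sums_summable[OF exp_sums_real[of e]] e by simp
  have cp: "(\<lambda>k. \<Sum>i\<le>k. f i * (L ^ i / fact i) * (e ^ (k - i) / fact (k - i))) sums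
      ((\<Sum>r. f r * (L ^ r / fact r)) * (\<Sum>r. e ^ r / fact r))"
    by (rule Cauchy_product_sums[OF sa sb])
  have "(\<Sum>r. f r * (L ^ r / fact r)) * exp e = (\<Sum>k. \<Sum>i\<le>k. f i * (L ^ i / fact i) * (e ^ (k - i) / fact (k - i)))"
    using cp sums_unique[OF exp_sums_real[of e]] by (simp add: sums_iff)
  also have "\<dots> \<le> (\<Sum>r. f r * ((L + e) ^ r / fact r))"
  proof (rule suminf_le[OF _ sums_summable[OF cp] s])
    fix k
    have "(\<Sum>i\<le>k. f i * (L ^ i / fact i) * (e ^ (k - i) / fact (k - i)))
        \<le> (\<Sum>i\<le>k. f k * (L ^ i / fact i * (e ^ (k - i) / fact (k - i))))"
    proof (intro sum_mono)
      fix i assume "i \<in> {..k}"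
      have c: "0 \<le> L ^ i / fact i * (e ^ (k - i) / fact (k - i))" using L e by simp
      have "f i * (L ^ i / fact i * (e ^ (k - i) / fact (k - i))) \<le> f k * (L ^ i / fact i * (e ^ (k - i) / fact (k - i)))"
        using fmono[of i k] \<open>i \<in> {..k}\<close> by (intro mult_right_mono[OF _ c]) auto
      then show "f i * (L ^ i / fact i) * (e ^ (k - i) / fact (k - i)) \<le> f k * (L ^ i / fact i * (e ^ (k - i) / fact (k - i)))"
        by (simp only: mult.assoc)
    qed
    also have "\<dots> = f k * ((L + e) ^ k / fact k)"
      by (simp only: sum_distrib_left[symmetric] binom_exp_sum)
    finally show "(\<Sum>i\<le>k. f i * (L ^ i / fact i) * (e ^ (k - i) / fact (k - i))) \<le> f k * ((L + e) ^ k / fact k)" .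
  qed
  finally show "(\<Sum>r. f r * (L ^ r / fact r)) * exp e \<le> (\<Sum>r. f r * ((L + e) ^ r / fact r))" .
qed


lemma poly_has_integral:
  fixes n :: nat and rho :: nat
  assumes m: "m \<ge> 1"
  shows "((\<lambda>x. (x + real rho) ^ (m - 1)) has_integral ww m (n + 1 + rho) / real m) {real n..<real n + 1}"
proof -
  have d: "((\<lambda>x. (x + real rho) ^ m / real m) has_vector_derivative (x + real rho) ^ (m - 1)) (at x within {real n..real n + 1})" for x
  proof -
    have "((\<lambda>x. (x + real rho) ^ m / real m) has_real_derivative (real m * (x + real rho) ^ (m - 1) * 1) / real m) (at x)"
      using m by (auto intro!: derivative_eq_intros simp: field_simps)
    then have "((\<lambda>x. (x + real rho) ^ m / real m) has_real_derivative (x + real rho) ^ (m - 1)) (at x)"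
      using m by simp
    then show ?thesis
      by (simp add: has_real_derivative_iff_has_vector_derivative has_vector_derivative_at_within)
  qed
  have "((\<lambda>x. (x + real rho) ^ (m - 1)) has_integral
      ((real n + 1 + real rho) ^ m / real m - (real n + real rho) ^ m / real m)) {real n..real n + 1}"
    by (rule fundamental_theorem_of_calculus) (use d in auto)
  moreover have "(real n + 1 + real rho) ^ m / real m - (real n + real rho) ^ m / real m = ww m (n + 1 + rho) / real m"
    unfolding ww_def by (simp add: diff_divide_distrib add_ac)
  ultimately have i: "((\<lambda>x. (x + real rho) ^ (m - 1)) has_integral ww m (n + 1 + rho) / real m) {real n..real n + 1}"
    by simp
  show ?thesis
  proof (subst has_integral_spike_set_eq[symmetric])
    show "negligible {x \<in> {real n..real n + 1} - {real n..<real n + 1}. (x + real rho) ^ (m - 1) \<noteq> 0}"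
      by (rule negligible_subset[OF negligible_sing[of "real n + 1"]]) auto
    show "negligible {x \<in> {real n..<real n + 1} - {real n..real n + 1}. (x + real rho) ^ (m - 1) \<noteq> 0}"
      by (rule negligible_subset[OF negligible_empty]) auto
  qed (rule i)
qed

definition pois :: "real \<Rightarrow> nat \<Rightarrow> real" where
  "pois th r = exp (- th) * th ^ r / fact r"

lemma pois_nonneg: "th > 0 \<Longrightarrow> 0 \<le> pois th r"
  unfolding pois_def by simp

lemma hfun_summable:
  assumes "th > 0" "x \<ge> 0"
  shows "summable (\<lambda>rho. pois th rho * (x + real rho) ^ (m - 1))"
proof -
  have "summable (\<lambda>r. exp (- th) * ((x + real r) ^ (m - 1) * (th ^ r / fact r)))"
    using summable_poly_exp[of x th "m - 1"] assms by (intro summable_mult) auto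
  then show ?thesis by (simp add: pois_def mult_ac)
qed

lemma hfun_eq: "hfun th m x = (\<Sum>rho. pois th rho * (x + real rho) ^ (m - 1))"
  unfolding hfun_def pois_def by simp

lemma hfun_nonneg:
  assumes "th > 0" "x \<ge> 0"
  shows "0 \<le> hfun th m x"
  unfolding hfun_eq using assms
  by (intro suminf_nonneg hfun_summable) (auto intro!: mult_nonneg_nonneg pois_nonneg)

lemma indicator_floor:
  assumes "x \<ge> 0"
  shows "indicator {real n..<real n + 1} x = (if n = nat \<lfloor>x\<rfloor> then 1 else (0::real))"
proof -
  have "x \<in> {real n..<real n + 1} \<longleftrightarrow> n = nat \<lfloor>x\<rfloor>"
  proof
    assume "x \<in> {real n..<real n + 1}"
    then have "\<lfloor>x\<rfloor> = int n" by (intro floor_unique) auto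
    then show "n = nat \<lfloor>x\<rfloor>" by simp
  next
    assume "n = nat \<lfloor>x\<rfloor>"
    then have "real n = of_int \<lfloor>x\<rfloor>" using assms by simp
    then show "x \<in> {real n..<real n + 1}" by (simp add: of_int_floor_le)
  qed
  then show ?thesis by (simp add: indicator_def)
qed

lemma Kh_series:
  fixes th :: real and m :: nat and c :: "nat \<Rightarrow> real" and F :: "real \<Rightarrow> real"
  assumes th: "th > 0" and m: "m \<ge> 1" and c0: "\<And>n. 0 \<le> c n"
    and F: "\<And>x. 0 \<le> x \<Longrightarrow> F x = c (nat \<lfloor>x\<rfloor>)"
    and sm: "summable (\<lambda>n. c n * (\<Sum>rho. pois th rho * ww m (n + 1 + rho)))"
  shows "(LBINT x:{0..}. hfun th m x * F x) * real m = (\<Sum>n. c n * (\<Sum>rho. pois th rho * ww m (n + 1 + rho)))"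
proof -
  define g where "g n x = indicator {real n..<real n + 1} x * (c n * hfun th m x)" for n x
  have gs: "(\<lambda>n. g n x) sums (indicator {0..} x * (hfun th m x * F x))" for x
  proof (cases "x \<ge> 0")
    case True
    have "(\<lambda>n. if n = nat \<lfloor>x\<rfloor> then c n * hfun th m x else 0) sums (c (nat \<lfloor>x\<rfloor>) * hfun th m x)"
      by (rule sums_single)
    moreover have "(\<lambda>n. g n x) = (\<lambda>n. if n = nat \<lfloor>x\<rfloor> then c n * hfun th m x else 0)"
      unfolding g_def indicator_floor[OF True] by auto
    ultimately show ?thesis using True F[OF True] by (simp add: mult.commute)
  next
    case False
    then have "g n x = 0" for n unfolding g_def by (auto simp: indicator_def)
    then show ?thesis using False by (simp add: indicator_def)
  qed
  have g0: "0 \<le> g n x" for n x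
  proof (cases "x \<in> {real n..<real n + 1}")
    case True
    then have "x \<ge> 0" by auto
    then show ?thesis unfolding g_def using True c0 hfun_nonneg[OF th] by auto
  qed (simp add: g_def)
  have meas_h: "(\<lambda>x. hfun th m x) \<in> borel_measurable borel"
    unfolding hfun_eq by measurable
  have meas_g: "g n \<in> borel_measurable borel" for n
    unfolding g_def using meas_h by measurable
  have J: "(\<integral>\<^sup>+ x. ennreal ((x + real rho) ^ (m - 1)) * indicator {real n..<real n + 1} x \<partial>lborel)
      = ennreal (ww m (n + 1 + rho) / real m)" for n rho
    by (rule nn_integral_has_integral_lebesgue'[OF _ poly_has_integral[OF m]]) auto
  have gn: "ennreal (g n x) = (\<Sum>rho. ennreal (c n * pois th rho) * (ennreal ((x + real rho) ^ (m - 1)) * indicator {real n..<real n + 1} x))" for n x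
  proof (cases "x \<in> {real n..<real n + 1}")
    case True
    then have x0: "x \<ge> 0" by auto
    have "ennreal (g n x) = ennreal (\<Sum>rho. c n * pois th rho * (x + real rho) ^ (m - 1))"
      unfolding g_def hfun_eq using True suminf_mult[OF hfun_summable[OF th x0], of "c n"]
      by (simp add: mult.assoc)
    also have "\<dots> = (\<Sum>rho. ennreal (c n * pois th rho * (x + real rho) ^ (m - 1)))"
      using hfun_summable[OF th x0] c0 pois_nonneg[OF th] x0
      by (intro suminf_ennreal2[symmetric]) (auto intro!: mult_nonneg_nonneg summable_mult simp: mult.assoc)
    also have "\<dots> = (\<Sum>rho. ennreal (c n * pois th rho) * (ennreal ((x + real rho) ^ (m - 1)) * indicator {real n..<real n + 1} x))"
      using True c0 pois_nonneg[OF th] x0 by (intro suminf_cong) (simp add: ennreal_mult)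
    finally show ?thesis .
  next
    case False
    then show ?thesis by (simp add: g_def)
  qed
  have tn: "0 \<le> c n * (\<Sum>rho. pois th rho * ww m (n + 1 + rho)) / real m" for n
  proof -
    have "0 \<le> (\<Sum>rho. pois th rho * ww m (n + 1 + rho))"
    proof (rule suminf_nonneg)
      have "summable (\<lambda>r. exp (- th) * (ww m (n + 1 + r) * (th ^ r / fact r)))"
        using summable_ww_exp[of th m "n + 1"] th by (intro summable_mult) auto
      then show "summable (\<lambda>rho. pois th rho * ww m (n + 1 + rho))" by (simp add: pois_def mult_ac)
    qed (use pois_nonneg[OF th] ww_nonneg in auto)
    then show "0 \<le> c n * (\<Sum>rho. pois th rho * ww m (n + 1 + rho)) / real m" using c0 by simp
  qed
  have "(\<integral>\<^sup>+ x. ennreal (indicator {0..} x * (hfun th m x * F x)) \<partial>lborel) = (\<integral>\<^sup>+ x. (\<Sum>n. ennreal (g n x)) \<partial>lborel)"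
    using gs g0 by (intro nn_integral_cong) (simp add: sums_iff suminf_ennreal2)
  also have "\<dots> = (\<Sum>n. \<integral>\<^sup>+ x. ennreal (g n x) \<partial>lborel)"
    using meas_g by (intro nn_integral_suminf) measurable
  also have "\<dots> = (\<Sum>n. \<Sum>rho. ennreal (c n * pois th rho) * ennreal (ww m (n + 1 + rho) / real m))"
  proof (intro suminf_cong)
    fix n
    have "(\<integral>\<^sup>+ x. ennreal (g n x) \<partial>lborel) =
       (\<integral>\<^sup>+ x. (\<Sum>rho. ennreal (c n * pois th rho) * (ennreal ((x + real rho) ^ (m - 1)) * indicator {real n..<real n + 1} x)) \<partial>lborel)"
      by (simp add: gn)
    also have "\<dots> = (\<Sum>rho. \<integral>\<^sup>+ x. ennreal (c n * pois th rho) * (ennreal ((x + real rho) ^ (m - 1)) * indicator {real n..<real n + 1} x) \<partial>lborel)"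
      by (intro nn_integral_suminf) measurable
    also have "\<dots> = (\<Sum>rho. ennreal (c n * pois th rho) * ennreal (ww m (n + 1 + rho) / real m))"
    proof (intro suminf_cong)
      fix rho
      have "(\<integral>\<^sup>+ x. ennreal (c n * pois th rho) * (ennreal ((x + real rho) ^ (m - 1)) * indicator {real n..<real n + 1} x) \<partial>lborel)
        = ennreal (c n * pois th rho) * (\<integral>\<^sup>+ x. ennreal ((x + real rho) ^ (m - 1)) * indicator {real n..<real n + 1} x \<partial>lborel)"
        by (rule nn_integral_cmult) measurable
      then show "(\<integral>\<^sup>+ x. ennreal (c n * pois th rho) * (ennreal ((x + real rho) ^ (m - 1)) * indicator {real n..<real n + 1} x) \<partial>lborel)
        = ennreal (c n * pois th rho) * ennreal (ww m (n + 1 + rho) / real m)"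
        by (simp only: J)
    qed
    finally show "(\<integral>\<^sup>+ x. ennreal (g n x) \<partial>lborel) = (\<Sum>rho. ennreal (c n * pois th rho) * ennreal (ww m (n + 1 + rho) / real m))" .
  qed
  also have "\<dots> = (\<Sum>n. ennreal (c n * (\<Sum>rho. pois th rho * ww m (n + 1 + rho)) / real m))"
  proof (intro suminf_cong)
    fix n
    have s: "summable (\<lambda>rho. pois th rho * ww m (n + 1 + rho))"
    proof -
      have "summable (\<lambda>r. exp (- th) * (ww m (n + 1 + r) * (th ^ r / fact r)))"
        using summable_ww_exp[of th m "n + 1"] th by (intro summable_mult) auto
      then show ?thesis by (simp add: pois_def mult_ac)
    qed
    have "(\<Sum>rho. ennreal (c n * pois th rho) * ennreal (ww m (n + 1 + rho) / real m))
        = (\<Sum>rho. ennreal (c n / real m * (pois th rho * ww m (n + 1 + rho))))"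
      using c0 pois_nonneg[OF th] ww_nonneg m
      by (intro suminf_cong) (simp add: ennreal_mult[symmetric] mult_ac)
    also have "\<dots> = ennreal (\<Sum>rho. c n / real m * (pois th rho * ww m (n + 1 + rho)))"
      using c0 pois_nonneg[OF th] ww_nonneg m s
      by (intro suminf_ennreal2) (auto intro!: mult_nonneg_nonneg summable_mult)
    also have "\<dots> = ennreal (c n * (\<Sum>rho. pois th rho * ww m (n + 1 + rho)) / real m)"
      using suminf_mult[OF s, of "c n / real m"] by simp
    finally show "(\<Sum>rho. ennreal (c n * pois th rho) * ennreal (ww m (n + 1 + rho) / real m))
        = ennreal (c n * (\<Sum>rho. pois th rho * ww m (n + 1 + rho)) / real m)" .
  qed
  also have "\<dots> = ennreal (\<Sum>n. c n * (\<Sum>rho. pois th rho * ww m (n + 1 + rho)) / real m)"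
    by (rule suminf_ennreal2[OF tn]) (use sm in \<open>simp add: summable_divide\<close>)
  finally have N: "(\<integral>\<^sup>+ x. ennreal (indicator {0..} x * (hfun th m x * F x)) \<partial>lborel)
      = ennreal (\<Sum>n. c n * (\<Sum>rho. pois th rho * ww m (n + 1 + rho)) / real m)" .
  have mf: "(\<lambda>x. indicator {0..} x * (hfun th m x * F x)) \<in> borel_measurable lborel"
  proof -
    have "(\<lambda>x. \<Sum>n. g n x) \<in> borel_measurable lborel" using meas_g by measurable
    moreover have "(\<lambda>x. \<Sum>n. g n x) = (\<lambda>x. indicator {0..} x * (hfun th m x * F x))"
      using gs by (auto simp: sums_iff)
    ultimately show ?thesis by simp
  qed
  have nn: "0 \<le> indicator {0..} x * (hfun th m x * F x)" for x
    by (rule sums_le[OF _ sums_zero gs[of x]]) (use g0 in auto)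
  have "(LBINT x:{0..}. hfun th m x * F x) = integral\<^sup>L lborel (\<lambda>x. indicator {0..} x * (hfun th m x * F x))"
    by (simp add: set_lebesgue_integral_def)
  also have "\<dots> = enn2real (\<integral>\<^sup>+ x. ennreal (indicator {0..} x * (hfun th m x * F x)) \<partial>lborel)"
    by (rule integral_eq_nn_integral[OF mf]) (use nn in auto)
  also have "\<dots> = (\<Sum>n. c n * (\<Sum>rho. pois th rho * ww m (n + 1 + rho)) / real m)"
  proof -
    have "0 \<le> (\<Sum>n. c n * (\<Sum>rho. pois th rho * ww m (n + 1 + rho)) / real m)"
      by (rule suminf_nonneg) (use sm tn in \<open>simp_all add: summable_divide\<close>)
    then show ?thesis unfolding N by simp
  qed
  also have "\<dots> = (\<Sum>n. c n * (\<Sum>rho. pois th rho * ww m (n + 1 + rho))) / real m"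
    by (rule suminf_divide[OF sm])
  finally show ?thesis using m by simp
qed


context
  fixes lam mu t :: real and m :: nat and tau :: "nat \<Rightarrow> real"
  assumes lam: "lam > 0" and mu: "mu > 0" and m1: "m \<ge> 1"
    and tau0: "\<And>n. tau n \<ge> 0" and taus: "tau sums 1"
    and taum: "summable (\<lambda>n. real n ^ m * tau n)" and t0: "t \<ge> 0"
begin

lemma th_pos: "lam / mu > 0" using lam mu by simp

lemma tau_summable: "summable tau" and tau_sum: "suminf tau = 1"
  using taus by (auto simp: sums_iff)

definition Gt :: "nat \<Rightarrow> real" where "Gt k = (\<Sum>i. if k \<le> i then tau i else 0)"

lemma Gt_summ: "summable (\<lambda>i. if k \<le> i then tau i else 0)"
  by (rule summable_comparison_test'[OF tau_summable]) (use tau0 in auto)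

lemma Gt_Suc: "Gt k = tau k + Gt (Suc k)"
proof -
  have "(\<lambda>i. if k \<le> i then tau i else 0) = (\<lambda>i. (if i = k then tau i else 0) + (if Suc k \<le> i then tau i else 0))"
    by auto
  then have "Gt k = (\<Sum>i. (if i = k then tau i else 0) + (if Suc k \<le> i then tau i else 0))"
    unfolding Gt_def by simp
  also have "\<dots> = (\<Sum>i. if i = k then tau i else 0) + Gt (Suc k)"
    unfolding Gt_def by (rule suminf_add[symmetric]) (auto intro: Gt_summ)
  also have "(\<Sum>i. if i = k then tau i else 0) = tau k"
    using sums_single[of k tau] by (simp add: sums_iff)
  finally show ?thesis .
qed

lemma Gt_formula: "Gt k = 1 - (\<Sum>i<k. tau i)"
proof (induction k)
  case 0
  then show ?case unfolding Gt_def using tau_sum by simp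
next
  case (Suc k)
  then show ?case using Gt_Suc[of k] by simp
qed

lemma Gt_0: "Gt 0 = 1" using Gt_formula[of 0] by simp

lemma Gt_lim: "Gt \<longlonglongrightarrow> 0"
proof -
  have "(\<lambda>k. \<Sum>i<k. tau i) \<longlonglongrightarrow> 1" using taus by (simp add: sums_def)
  then have "(\<lambda>k. 1 - (\<Sum>i<k. tau i)) \<longlonglongrightarrow> 1 - 1" by (intro tendsto_intros)
  then show ?thesis unfolding Gt_formula[abs_def] by simp
qed

lemma Gt_dec: "Gt (Suc k) \<le> Gt k" using Gt_Suc[of k] tau0[of k] by simp

lemma Gt_nonneg: "0 \<le> Gt k"
  unfolding Gt_def by (rule suminf_nonneg[OF Gt_summ]) (use tau0 in auto)

abbreviation "G \<equiv> Gs (lam / mu)"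

lemma G_nonneg: "0 \<le> G k" by (rule Gs_nonneg[OF th_pos])

lemma G_dec: "G (Suc k) \<le> G k"
proof -
  have "G (Suc k) = (lam / mu) * G k / (lam / mu + 1 + real k)" by (rule Gs_Suc[OF th_pos])
  also have "\<dots> \<le> G k"
  proof -
    have p: "lam / mu + 1 + real k > 0" using th_pos by simp
    have "(lam / mu) * G k \<le> G k * (lam / mu + 1 + real k)"
      using G_nonneg[of k] th_pos by (simp add: algebra_simps)
    then show ?thesis by (simp only: pos_divide_le_eq[OF p])
  qed
  finally show ?thesis .
qed

lemma G_le: "G k \<le> (lam / mu) ^ k / fact k"
proof (induction k)
  case 0 then show ?case by simp
next
  case (Suc k)
  have "G (Suc k) = (lam / mu) * G k / (lam / mu + 1 + real k)" by (rule Gs_Suc[OF th_pos])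
  also have "\<dots> \<le> (lam / mu) * G k / (1 + real k)"
    using th_pos G_nonneg[of k] by (intro divide_left_mono mult_nonneg_nonneg) auto
  also have "\<dots> \<le> (lam / mu) * ((lam / mu) ^ k / fact k) / (1 + real k)"
    using th_pos Suc by (intro divide_right_mono mult_left_mono) auto
  also have "\<dots> = (lam / mu) ^ Suc k / fact (Suc k)"
    by (simp add: field_simps)
  finally show ?case .
qed

lemma G_lim: "G \<longlonglongrightarrow> 0"
proof (rule Lim_null_comparison)
  show "(\<lambda>k. (lam / mu) ^ k / fact k) \<longlonglongrightarrow> 0"
    by (rule summable_LIMSEQ_zero[OF sums_summable[OF exp_sums_real]])
  show "\<forall>\<^sub>F k in sequentially. norm (G k) \<le> (lam / mu) ^ k / fact k"
    using G_le G_nonneg by auto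
qed

definition d :: "nat \<Rightarrow> real" where "d k = Gt k - G k"

lemma d_0: "d 0 = 0" by (simp add: d_def Gt_0)

lemma abs_d: "\<bar>d k\<bar> \<le> Gt k + G k"
  unfolding d_def using Gt_nonneg[of k] G_nonneg[of k] by linarith

lemma tau_ee_summable: "summable (\<lambda>i. tau i * ee (lam / mu) k i)"
proof -
  have "(\<lambda>i. tau i * ee (lam / mu) k i) = (\<lambda>i. (if k \<le> i then tau i else 0) - G k * tau i)"
    by (auto simp: ee_def algebra_simps)
  then show ?thesis using Gt_summ tau_summable by (simp add: summable_diff summable_mult)
qed

lemma tau_ee_sum: "(\<Sum>i. tau i * ee (lam / mu) k i) = d k"
proof -
  have "(\<lambda>i. tau i * ee (lam / mu) k i) = (\<lambda>i. (if k \<le> i then tau i else 0) - G k * tau i)"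
    by (auto simp: ee_def algebra_simps)
  then have "(\<Sum>i. tau i * ee (lam / mu) k i) = (\<Sum>i. (if k \<le> i then tau i else 0) - G k * tau i)" by simp
  also have "\<dots> = Gt k - G k * suminf tau"
    unfolding Gt_def
    by (subst suminf_diff[symmetric]) (auto intro: Gt_summ summable_mult tau_summable simp: suminf_mult[OF tau_summable])
  finally show ?thesis using tau_sum by (simp add: d_def)
qed

abbreviation "B r k \<equiv> bb lam mu r k t"

definition Dl :: "nat \<Rightarrow> real" where "Dl n = (\<Sum>k\<in>{1..n}. B (n - k) k * d k)"

definition A :: "nat \<Rightarrow> real" where "A n = G n + Dl n"

lemma tau_V:
  "summable (\<lambda>i. tau i * V lam mu n t i)" "(\<Sum>i. tau i * V lam mu n t i) = A n"
proof -
  have e: "(\<lambda>i. tau i * V lam mu n t i) = (\<lambda>i. G n * tau i + (\<Sum>k\<in>{1..n}. B (n - k) k * (tau i * ee (lam / mu) k i)))"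
    by (auto simp: V_def algebra_simps sum_distrib_left)
  have s: "summable (\<lambda>i. \<Sum>k\<in>{1..n}. B (n - k) k * (tau i * ee (lam / mu) k i))"
    by (intro summable_sum summable_mult tau_ee_summable)
  show "summable (\<lambda>i. tau i * V lam mu n t i)"
    unfolding e by (intro summable_add summable_mult tau_summable s)
  have "(\<Sum>i. tau i * V lam mu n t i) = G n * suminf tau + (\<Sum>i. \<Sum>k\<in>{1..n}. B (n - k) k * (tau i * ee (lam / mu) k i))"
    unfolding e
  proof (subst suminf_add[symmetric])
    show "summable (\<lambda>i. G n * tau i)" by (intro summable_mult tau_summable)
    show "summable (\<lambda>i. \<Sum>k\<in>{1..n}. B (n - k) k * (tau i * ee (lam / mu) k i))" by (rule s)
  qed (simp add: suminf_mult[OF tau_summable])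
  also have "(\<Sum>i. \<Sum>k\<in>{1..n}. B (n - k) k * (tau i * ee (lam / mu) k i)) = (\<Sum>k\<in>{1..n}. \<Sum>i. B (n - k) k * (tau i * ee (lam / mu) k i))"
    by (rule suminf_sum) (intro summable_mult tau_ee_summable)
  also have "\<dots> = Dl n"
    unfolding Dl_def by (intro sum.cong refl) (simp add: suminf_mult tau_ee_summable tau_ee_sum)
  finally show "(\<Sum>i. tau i * V lam mu n t i) = A n" using tau_sum by (simp add: A_def)
qed

lemma distX_eq: "distX lam mu tau t j = A j - A (Suc j)"
proof -
  have "distX lam mu tau t j = (\<Sum>i. tau i * V lam mu j t i - tau i * V lam mu (Suc j) t i)"
    unfolding distX_def ptrans_eq[OF lam mu t0] Fc_def by (simp add: algebra_simps)
  also have "\<dots> = A j - A (Suc j)"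
    by (subst suminf_diff[symmetric]) (auto simp: tau_V)
  finally show ?thesis .
qed

lemma distX_nonneg: "0 \<le> distX lam mu tau t j"
proof -
  have "distX lam mu tau t j = (\<Sum>i. tau i * V lam mu j t i - tau i * V lam mu (Suc j) t i)"
    unfolding distX_def ptrans_eq[OF lam mu t0] Fc_def by (simp add: algebra_simps)
  also have "\<dots> = (\<Sum>i. tau i * Fc lam mu t i j)"
    by (simp add: Fc_def algebra_simps)
  also have "\<dots> \<ge> 0"
  proof (rule suminf_nonneg)
    have "(\<lambda>i. tau i * Fc lam mu t i j) = (\<lambda>i. tau i * V lam mu j t i - tau i * V lam mu (Suc j) t i)"
      by (simp add: Fc_def algebra_simps)
    then show "summable (\<lambda>i. tau i * Fc lam mu t i j)" by (simp add: summable_diff tau_V)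
  qed (use tau0 Fc_nonneg[OF lam mu t0] in auto)
  finally show ?thesis .
qed

lemma A_dec: "A (Suc j) \<le> A j"
  using distX_nonneg[of j] distX_eq[of j] by simp


definition M :: "nat \<Rightarrow> real" where "M k = (\<Sum>rho. pois (lam / mu) rho * ww m (k + rho))"

lemma M_summ: "summable (\<lambda>rho. pois (lam / mu) rho * ww m (k + rho))"
proof -
  have "summable (\<lambda>r. exp (- (lam / mu)) * (ww m (k + r) * ((lam / mu) ^ r / fact r)))"
    using summable_ww_exp[of "lam / mu" m k] th_pos by (intro summable_mult) auto
  then show ?thesis by (simp add: pois_def mult_ac)
qed

lemma M_nonneg: "0 \<le> M k"
  unfolding M_def by (rule suminf_nonneg[OF M_summ]) (use pois_nonneg[OF th_pos] ww_nonneg in auto)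

definition Q :: real where "Q = (\<Sum>rho. pois (lam / mu) rho * (1 + real rho) ^ (m - 1))"

lemma Q_summ: "summable (\<lambda>rho. pois (lam / mu) rho * (1 + real rho) ^ (m - 1))"
  using hfun_summable[OF th_pos, of 1 m] by simp

lemma Q_nonneg: "0 \<le> Q"
  unfolding Q_def by (rule suminf_nonneg[OF Q_summ]) (use pois_nonneg[OF th_pos] in auto)

lemma M_le:
  assumes "k \<ge> 1"
  shows "M k \<le> real m * ww m k * Q"
proof -
  have "pois (lam / mu) rho * ww m (k + rho) \<le> real m * ww m k * (pois (lam / mu) rho * (1 + real rho) ^ (m - 1))" for rho
  proof -
    have "ww m (k + rho) \<le> real m * real (k + rho) ^ (m - 1)" by (rule ww_upper)
    also have "\<dots> \<le> real m * (real k * (1 + real rho)) ^ (m - 1)"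
    proof -
      have "1 * real rho \<le> real k * real rho" by (rule mult_right_mono) (use assms in auto)
      then have "real (k + rho) \<le> real k * (1 + real rho)" by (simp add: algebra_simps)
      then show ?thesis by (intro mult_left_mono power_mono) auto
    qed
    also have "\<dots> = real m * (real k ^ (m - 1) * (1 + real rho) ^ (m - 1))"
      by (simp add: power_mult_distrib)
    also have "\<dots> \<le> real m * (ww m k * (1 + real rho) ^ (m - 1))"
      using ww_lower[OF assms m1] by (intro mult_left_mono mult_right_mono) auto
    finally have "ww m (k + rho) \<le> real m * (ww m k * (1 + real rho) ^ (m - 1))" .
    then have "pois (lam / mu) rho * ww m (k + rho) \<le> pois (lam / mu) rho * (real m * (ww m k * (1 + real rho) ^ (m - 1)))"
      using pois_nonneg[OF th_pos] by (intro mult_left_mono) auto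
    then show ?thesis by (simp add: mult_ac)
  qed
  then have "M k \<le> (\<Sum>rho. real m * ww m k * (pois (lam / mu) rho * (1 + real rho) ^ (m - 1)))"
    unfolding M_def by (intro suminf_le M_summ summable_mult Q_summ)
  also have "\<dots> = real m * ww m k * Q"
    unfolding Q_def by (rule suminf_mult[OF Q_summ])
  finally show ?thesis .
qed

lemma wGt_summ: "summable (\<lambda>k. ww m k * Gt k)"
proof (rule tail_sum(2)[of Gt "ww m"])
  show "Gt (Suc j) \<le> Gt j" for j by (rule Gt_dec)
  show "Gt \<longlonglongrightarrow> 0" by (rule Gt_lim)
  show "0 \<le> ww m n" for n by (rule ww_nonneg)
  have "(\<lambda>j. (\<Sum>n<Suc j. ww m n) * (Gt j - Gt (Suc j))) = (\<lambda>j. real j ^ m * tau j)"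
  proof (rule ext)
    fix j
    have "Gt j - Gt (Suc j) = tau j" using Gt_Suc[of j] by linarith
    then show "(\<Sum>n<Suc j. ww m n) * (Gt j - Gt (Suc j)) = real j ^ m * tau j"
      by (simp only: ww_sum[OF m1])
  qed
  then show "summable (\<lambda>j. (\<Sum>n<Suc j. ww m n) * (Gt j - Gt (Suc j)))" using taum by simp
qed

lemma wG_summ: "summable (\<lambda>k. ww m k * G k)"
proof (rule summable_comparison_test')
  show "summable (\<lambda>k. (0 + real k) ^ m * ((lam / mu) ^ k / fact k))"
    by (rule summable_poly_exp) (use th_pos in auto)
  fix k
  show "norm (ww m k * G k) \<le> (0 + real k) ^ m * ((lam / mu) ^ k / fact k)"
  proof -
    have "ww m k * G k \<le> real k ^ m * ((lam / mu) ^ k / fact k)"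
      using ww_nonneg[of m k] G_nonneg[of k] ww_le_pow[of m k] G_le[of k] by (intro mult_mono) auto
    then show ?thesis using ww_nonneg[of m k] G_nonneg[of k] by simp
  qed
qed

lemma dM_summ: "summable (\<lambda>k. \<bar>d k\<bar> * M k)"
proof (rule summable_comparison_test')
  show "summable (\<lambda>k. real m * Q * (ww m k * Gt k + ww m k * G k))"
    by (intro summable_mult summable_add wGt_summ wG_summ)
  fix k
  show "norm (\<bar>d k\<bar> * M k) \<le> real m * Q * (ww m k * Gt k + ww m k * G k)"
  proof (cases "k = 0")
    case True
    then show ?thesis using d_0 Q_nonneg ww_nonneg[of m 0] by simp
  next
    case False
    then have k1: "k \<ge> 1" by simp
    have "norm (\<bar>d k\<bar> * M k) = \<bar>d k\<bar> * M k" using M_nonneg by simp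
    also have "\<dots> \<le> (Gt k + G k) * (real m * ww m k * Q)"
      using abs_d[of k] M_le[OF k1] M_nonneg by (intro mult_mono) auto
    also have "\<dots> = real m * Q * (ww m k * Gt k + ww m k * G k)" by (simp add: algebra_simps)
    finally show ?thesis .
  qed
qed

definition S :: "nat \<Rightarrow> real" where "S k = (\<Sum>r. ww m (k + r) * B r k)"

lemma B_eq: "B r k = exp (- (lam + mu * real k) * t) * (Lam lam mu t ^ r / fact r)"
  unfolding bb_def by simp

lemma S_summ: "summable (\<lambda>r. ww m (k + r) * B r k)"
proof -
  have "summable (\<lambda>r. exp (- (lam + mu * real k) * t) * (ww m (k + r) * (Lam lam mu t ^ r / fact r)))"
    using summable_ww_exp[of "Lam lam mu t" m k] Lam_bounds[OF lam mu t0] by (intro summable_mult) auto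
  then show ?thesis by (simp add: B_eq mult_ac)
qed

lemma S_nonneg: "0 \<le> S k"
  unfolding S_def by (rule suminf_nonneg[OF S_summ]) (use ww_nonneg bb_nonneg[OF lam mu t0] in auto)

definition cc :: real where "cc = exp (- mu * t - (lam / mu) * (exp (- mu * t) + mu * t - 1))"

lemma cc_pos: "0 < cc" unfolding cc_def by simp

lemma S_le:
  assumes "k \<ge> 1"
  shows "S k \<le> cc * M k"
proof -
  define L where "L = Lam lam mu t"
  define e where "e = lam / mu * exp (- mu * t)"
  have Le: "L + e = lam / mu" unfolding L_def e_def Lam_def by (simp add: algebra_simps)
  have L0: "0 \<le> L" unfolding L_def using Lam_bounds[OF lam mu t0] by simp
  have e0: "0 \<le> e" unfolding e_def using lam mu by simp
  have sth: "summable (\<lambda>r. ww m (k + r) * ((L + e) ^ r / fact r))"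
    unfolding Le using summable_ww_exp[of "lam / mu" m k] th_pos by simp
  have pm: "(\<Sum>r. ww m (k + r) * (L ^ r / fact r)) * exp e \<le> (\<Sum>r. ww m (k + r) * ((L + e) ^ r / fact r))"
    by (rule pois_mono(2)[OF ww_nonneg _ L0 e0 sth]) (simp add: ww_mono)
  have sL: "summable (\<lambda>r. ww m (k + r) * (L ^ r / fact r))"
    by (rule pois_mono(1)[OF ww_nonneg _ L0 e0 sth]) (simp add: ww_mono)
  define E where "E = exp (- (lam + mu * real k) * t)"
  have SE: "S k = E * (\<Sum>r. ww m (k + r) * (L ^ r / fact r))"
    unfolding S_def B_eq E_def L_def
    by (subst suminf_mult[symmetric]) (use sL[unfolded L_def] in \<open>auto simp: mult_ac\<close>)
  have ME: "M k = exp (- (lam / mu)) * (\<Sum>r. ww m (k + r) * ((L + e) ^ r / fact r))"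
    unfolding M_def Le pois_def
    by (subst suminf_mult[symmetric]) (use sth[unfolded Le] in \<open>auto simp: mult_ac\<close>)
  have "S k \<le> E * ((\<Sum>r. ww m (k + r) * ((L + e) ^ r / fact r)) / exp e)"
    unfolding SE E_def using pm by (intro mult_left_mono) (auto simp: pos_le_divide_eq)
  also have "\<dots> = (E * exp (- e) * exp (lam / mu)) * M k"
    unfolding ME by (simp add: exp_minus field_simps)
  also have "\<dots> \<le> cc * M k"
  proof (intro mult_right_mono M_nonneg)
    have "E * exp (- e) * exp (lam / mu) = exp (- (lam + mu * real k) * t - e + lam / mu)"
      unfolding E_def by (simp add: exp_add exp_diff exp_minus field_simps)
    also have "\<dots> \<le> cc"
      unfolding cc_def
    proof (subst exp_le_cancel_iff)
      have "mu * t \<le> mu * real k * t" using assms mu t0 by (simp add: mult_right_mono mult_left_mono)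
      moreover have "lam / mu * (mu * t) = lam * t" using mu by simp
      ultimately show "- (lam + mu * real k) * t - e + lam / mu \<le> - mu * t - lam / mu * (exp (- mu * t) + mu * t - 1)"
        unfolding e_def by (simp add: algebra_simps)
    qed
    finally show "E * exp (- e) * exp (lam / mu) \<le> cc" .
  qed
  finally show ?thesis .
qed

lemma dS_summ: "summable (\<lambda>k. \<bar>d k\<bar> * S k)"
proof (rule summable_comparison_test')
  show "summable (\<lambda>k. cc * (\<bar>d k\<bar> * M k))" by (intro summable_mult dM_summ)
  fix k
  show "norm (\<bar>d k\<bar> * S k) \<le> cc * (\<bar>d k\<bar> * M k)"
  proof (cases "k = 0")
    case True then show ?thesis by (simp add: d_0)
  next
    case False
    then have "S k \<le> cc * M k" by (intro S_le) simp
    then have "\<bar>d k\<bar> * S k \<le> \<bar>d k\<bar> * (cc * M k)" by (intro mult_left_mono) auto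
    then show ?thesis using S_nonneg[of k] by (simp add: abs_mult mult_ac)
  qed
qed

lemma Dl_0: "Dl 0 = 0" by (simp add: Dl_def)

lemma diag:
  shows "(\<lambda>n. ww m n * Dl n) sums (\<Sum>k. d k * S k)"
    and "summable (\<lambda>n. ww m n * \<bar>Dl n\<bar>)"
proof -
  define f where "f k r = d k * (ww m (k + r) * B r k)" for k r
  have fa: "\<bar>f k r\<bar> = \<bar>d k\<bar> * (ww m (k + r) * B r k)" for k r
    unfolding f_def using ww_nonneg bb_nonneg[OF lam mu t0] by (simp add: abs_mult)
  have h1: "summable (\<lambda>r. \<bar>f k r\<bar>)" for k
    unfolding fa by (intro summable_mult S_summ)
  have h1': "(\<Sum>r. \<bar>f k r\<bar>) = \<bar>d k\<bar> * S k" for k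
    unfolding fa S_def by (rule suminf_mult[OF S_summ])
  have h2: "summable (\<lambda>k. \<Sum>r. \<bar>f k r\<bar>)" unfolding h1' by (rule dS_summ)
  have fs: "(\<Sum>r. f k r) = d k * S k" for k
    unfolding f_def S_def by (rule suminf_mult[OF S_summ])
  have diagsum: "(\<Sum>k\<le>n. f k (n - k)) = ww m n * Dl n" for n
  proof -
    have "(\<Sum>k\<le>n. f k (n - k)) = (\<Sum>k\<le>n. ww m n * (B (n - k) k * d k))"
      unfolding f_def by (intro sum.cong) (auto simp: mult_ac)
    also have "\<dots> = ww m n * (\<Sum>k\<le>n. B (n - k) k * d k)" by (simp add: sum_distrib_left)
    also have "(\<Sum>k\<le>n. B (n - k) k * d k) = Dl n"
      unfolding Dl_def
    proof (rule sum.mono_neutral_right)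
      show "\<forall>i\<in>{..n} - {1..n}. B (n - i) i * d i = 0"
      proof
        fix i assume "i \<in> {..n} - {1..n}"
        then have "i = 0" by auto
        then show "B (n - i) i * d i = 0" by (simp add: d_0)
      qed
    qed auto
    finally show ?thesis .
  qed
  show "(\<lambda>n. ww m n * Dl n) sums (\<Sum>k. d k * S k)"
    using diag_fubini(1)[OF h1 h2] unfolding diagsum fs .
  show "summable (\<lambda>n. ww m n * \<bar>Dl n\<bar>)"
  proof (rule summable_comparison_test'[OF diag_fubini(2)[OF h1 h2]])
    fix n
    have "norm (ww m n * \<bar>Dl n\<bar>) = \<bar>\<Sum>k\<le>n. f k (n - k)\<bar>"
      unfolding diagsum using ww_nonneg by (simp add: abs_mult)
    also have "\<dots> \<le> (\<Sum>k\<le>n. \<bar>f k (n - k)\<bar>)" by (rule sum_abs)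
    finally show "norm (ww m n * \<bar>Dl n\<bar>) \<le> (\<Sum>k\<le>n. \<bar>f k (n - k)\<bar>)" .
  qed
qed

lemma Dl_lim: "Dl \<longlonglongrightarrow> 0"
proof (rule Lim_null_comparison)
  show "(\<lambda>n. ww m n * \<bar>Dl n\<bar>) \<longlonglongrightarrow> 0" by (rule summable_LIMSEQ_zero[OF diag(2)])
  have "\<bar>Dl n\<bar> \<le> ww m n * \<bar>Dl n\<bar>" for n
  proof (cases "n = 0")
    case True then show ?thesis by (simp add: Dl_0)
  next
    case False
    then have "1 \<le> real n ^ (m - 1)" by (intro one_le_power) simp
    also have "\<dots> \<le> ww m n" using False m1 by (intro ww_lower) auto
    finally show ?thesis by (simp add: mult_le_cancel_right1)
  qed
  then show "\<forall>\<^sub>F n in sequentially. norm (Dl n) \<le> ww m n * \<bar>Dl n\<bar>" by simp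
qed

lemma A_lim: "A \<longlonglongrightarrow> 0"
  using tendsto_add[OF G_lim Dl_lim] unfolding A_def[abs_def] by simp

lemma main_identity:
  "(\<Sum>j. real j ^ m * distX lam mu tau t j) - (\<Sum>j. real j ^ m * pistar (lam / mu) j) = (\<Sum>k. d k * S k)"
proof -
  have sDl: "summable (\<lambda>n. ww m n * Dl n)" using diag(1) by (rule sums_summable)
  have sA: "summable (\<lambda>n. ww m n * A n)"
    using summable_add[OF wG_summ sDl] unfolding A_def by (simp add: algebra_simps)
  have s1: "(\<lambda>j. real j ^ m * distX lam mu tau t j) sums (\<Sum>n. ww m n * A n)"
  proof -
    have "(\<lambda>j. (\<Sum>n<Suc j. ww m n) * (A j - A (Suc j))) sums (\<Sum>n. ww m n * A n)"
      by (rule tail_sum(1)[OF A_dec A_lim ww_nonneg sA])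
    then show ?thesis by (simp only: ww_sum[OF m1] distX_eq)
  qed
  have s2: "(\<lambda>j. real j ^ m * pistar (lam / mu) j) sums (\<Sum>n. ww m n * G n)"
  proof -
    have "(\<lambda>j. (\<Sum>n<Suc j. ww m n) * (G j - G (Suc j))) sums (\<Sum>n. ww m n * G n)"
      by (rule tail_sum(1)[OF G_dec G_lim ww_nonneg wG_summ])
    then show ?thesis by (simp only: ww_sum[OF m1] pistar_Gs[OF th_pos])
  qed
  have "(\<Sum>j. real j ^ m * distX lam mu tau t j) - (\<Sum>j. real j ^ m * pistar (lam / mu) j)
      = (\<Sum>n. ww m n * A n) - (\<Sum>n. ww m n * G n)"
    using s1 s2 by (simp add: sums_iff)
  also have "\<dots> = (\<Sum>n. ww m n * A n - ww m n * G n)" by (rule suminf_diff[OF sA wG_summ])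
  also have "\<dots> = (\<Sum>n. ww m n * Dl n)" by (simp add: A_def algebra_simps)
  also have "\<dots> = (\<Sum>k. d k * S k)" using diag(1) by (simp add: sums_iff)
  finally show ?thesis .
qed

lemma dS_bound: "\<bar>\<Sum>k. d k * S k\<bar> \<le> cc * (\<Sum>k. \<bar>d k\<bar> * M k)"
proof -
  have sa: "summable (\<lambda>k. \<bar>d k * S k\<bar>)"
    using dS_summ S_nonneg by (simp add: abs_mult)
  have "\<bar>\<Sum>k. d k * S k\<bar> \<le> (\<Sum>k. \<bar>d k * S k\<bar>)" by (rule summable_rabs[OF sa])
  also have "\<dots> \<le> (\<Sum>k. cc * (\<bar>d k\<bar> * M k))"
  proof (rule suminf_le[OF _ sa summable_mult[OF dM_summ]])
    fix k
    show "\<bar>d k * S k\<bar> \<le> cc * (\<bar>d k\<bar> * M k)"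
    proof (cases "k = 0")
      case True then show ?thesis by (simp add: d_0)
    next
      case False
      then have "S k \<le> cc * M k" by (intro S_le) simp
      then have "\<bar>d k\<bar> * S k \<le> \<bar>d k\<bar> * (cc * M k)" by (intro mult_left_mono) auto
      then show ?thesis using S_nonneg[of k] by (simp add: abs_mult mult_ac)
    qed
  qed
  also have "\<dots> = cc * (\<Sum>k. \<bar>d k\<bar> * M k)" by (rule suminf_mult[OF dM_summ])
  finally show ?thesis .
qed

lemma cdf_tau: "cdfN tau x = 1 - Gt (Suc (nat \<lfloor>x\<rfloor>))"
  unfolding cdfN_def Gt_formula by (simp add: lessThan_Suc_atMost)

lemma cdf_pi: "cdfN (pistar (lam / mu)) x = 1 - G (Suc (nat \<lfloor>x\<rfloor>))"
proof -
  have "cdfN (pistar (lam / mu)) x = (\<Sum>n<Suc (nat \<lfloor>x\<rfloor>). G n - G (Suc n))"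
    unfolding cdfN_def pistar_Gs[OF th_pos] by (simp add: lessThan_Suc_atMost)
  also have "\<dots> = G 0 - G (Suc (nat \<lfloor>x\<rfloor>))" by (rule sum_lessThan_telescope')
  finally show ?thesis by simp
qed

lemma Kh_eq: "real m * Kh (lam / mu) m tau = (\<Sum>k. \<bar>d k\<bar> * M k)"
proof -
  have sm: "summable (\<lambda>n. \<bar>d (Suc n)\<bar> * M (Suc n))"
    using dM_summ by (subst summable_Suc_iff)
  have Meq: "M (Suc n) = (\<Sum>rho. pois (lam / mu) rho * ww m (n + 1 + rho))" for n
    unfolding M_def by simp
  have "Kh (lam / mu) m tau * real m = (\<Sum>n. \<bar>d (Suc n)\<bar> * (\<Sum>rho. pois (lam / mu) rho * ww m (n + 1 + rho)))"
    unfolding Kh_def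
  proof (rule Kh_series[OF th_pos m1])
    show "0 \<le> \<bar>d (Suc n)\<bar>" for n by simp
    show "\<bar>cdfN tau x - cdfN (pistar (lam / mu)) x\<bar> = \<bar>d (Suc (nat \<lfloor>x\<rfloor>))\<bar>" for x
      unfolding cdf_tau cdf_pi d_def by simp
    show "summable (\<lambda>n. \<bar>d (Suc n)\<bar> * (\<Sum>rho. pois (lam / mu) rho * ww m (n + 1 + rho)))"
      using sm unfolding Meq .
  qed
  also have "\<dots> = (\<Sum>n. \<bar>d (Suc n)\<bar> * M (Suc n))" unfolding Meq ..
  also have "\<dots> = (\<Sum>k. \<bar>d k\<bar> * M k) - \<bar>d 0\<bar> * M 0" by (rule suminf_split_head[OF dM_summ])
  finally show ?thesis by (simp add: d_0 mult.commute)
qed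

lemma main_bound:
  "\<bar>(\<Sum>j. real j ^ m * distX lam mu tau t j) - (\<Sum>j. real j ^ m * pistar (lam / mu) j)\<bar>
     \<le> real m * Kh (lam / mu) m tau * exp (- mu * t - (lam / mu) * (exp (- mu * t) + mu * t - 1))"
  unfolding main_identity Kh_eq using dS_bound by (simp add: cc_def mult.commute)

end

theorem mainTheorem6:
  fixes lam mu t :: real and m :: nat and tau :: "nat \<Rightarrow> real"
  assumes "lam > 0" and "mu > 0" and "m \<ge> 1"
    and "\<And>n. tau n \<ge> 0" and "tau sums 1"
    and "summable (\<lambda>n. real n ^ m * tau n)"
    and "t \<ge> 0"
  shows "\<bar>(\<Sum>j. real j ^ m * distX lam mu tau t j) - (\<Sum>j. real j ^ m * pistar (lam / mu) j)\<bar>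
         \<le> real m * Kh (lam / mu) m tau
           * exp (- mu * t - (lam / mu) * (exp (- mu * t) + mu * t - 1))"
  by (rule main_bound[OF assms])


end
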